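(* Let $S\subseteq\mathbb{F}_2^{27}$ be the linear subspace spanned by the six vectors (written as bit strings, coordinate $1$ leftmost, coordinate $27$ rightmost) $\xi^1 = 100010001010101010100011110$, $\xi^2 = 101010111001100000001010101$, $\xi^3 = 011001100111100111100110011$, $\xi^4 = 000111100000011001100001111$, $\xi^5 = 000000011111111000011111111$, $\xi^6 = 000000000000000111111111111$, and let $Q:\mathbb{F}_2^{27}\to\mathbb{F}_2$ be the quadratic form $Q(x)= x_{1}x_{2} + x_{1}x_{3} + x_{1}x_{8} + x_{2}x_{4} + x_{2}x_{8} + x_{2}x_{16} + x_{3}x_{4} + x_{3}x_{8} + x_{3}x_{16} + x_{4}x_{8} + x_{8}x_{16}$ (arithmetic mod $2$). Define the (normalized) 27-qubit states $|S\rangle = \frac{1}{\sqrt{|S|}}\sum_{x\in S}|x\rangle$ and $|Q,S\rangle=\frac{1}{\sqrt{|S|}}\sum_{x\in S}(-1)^{Q(x)}|x\rangle$. Then $|S\rangle$ and $|Q,S\rangle$ are stabilizer states which are local unitary (LU) equivalent but not local Clifford (LC) equivalent. In particular, the LU-LC conjecture (every two LU equivalent stabilizer states are LC equivalent) is false.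
   Context: Pauli matrices $X,Y,Z$; the Pauli group $\mathcal{G}$ is generated by them. An $n$-qubit stabilizer state is the unique common $+1$ eigenvector of an Abelian subgroup of $\mathcal{G}^{\otimes n}$ of cardinality $2^n$ not containing $-I^{\otimes n}$. A single-qubit Clifford operator is a $2\times 2$ unitary $U$ with $U\mathcal{G}U^\dagger=\mathcal{G}$. Two $n$-qubit states $|\psi_0\rangle,|\psi_1\rangle$ are LU equivalent if $\bigotimes_{j=1}^n U_j|\psi_0\rangle=|\psi_1\rangle$ for some single-qubit unitaries $U_j$, and LC equivalent if this holds with all $U_j$ Clifford operators. $|x\rangle$ denotes the computational basis state labelled by $x\in\mathbb{F}_2^{27}$. *)

theory Defs
  imports Complex_Main
begin

text \<open>An n-qubit state is a complex function on bit strings (bool lists) which vanishes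
outside the strings of length n; coordinate j of a string (j = 0,...,n-1) is qubit j+1.
A single-qubit operator is a 2x2 complex matrix indexed by bool (False = |0>, True = |1>),
an n-qubit operator is a matrix indexed by bit strings.\<close>

type_synonym qstate = "bool list \<Rightarrow> complex"
type_synonym qop1 = "bool \<Rightarrow> bool \<Rightarrow> complex"
type_synonym qop = "bool list \<Rightarrow> bool list \<Rightarrow> complex"

definition bitstrings :: "nat \<Rightarrow> bool list set" where
  "bitstrings n = {xs. length xs = n}"

definition is_state :: "nat \<Rightarrow> qstate \<Rightarrow> bool" where
  "is_state n \<psi> \<longleftrightarrow> (\<forall>x. length x \<noteq> n \<longrightarrow> \<psi> x = 0)"

definition apply_op :: "nat \<Rightarrow> qop \<Rightarrow> qstate \<Rightarrow> qstate" where
  "apply_op n A \<psi> = (\<lambda>y. if length y = n then (\<Sum>x\<in>bitstrings n. A y x * \<psi> x) else 0)"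

definition mult_op :: "nat \<Rightarrow> qop \<Rightarrow> qop \<Rightarrow> qop" where
  "mult_op n A B = (\<lambda>y z. \<Sum>x\<in>bitstrings n. A y x * B x z)"

definition kron :: "nat \<Rightarrow> (nat \<Rightarrow> qop1) \<Rightarrow> qop" where
  "kron n Us = (\<lambda>y x. if length y = n \<and> length x = n
                        then (\<Prod>j<n. Us j (y ! j) (x ! j)) else 0)"

definition mult1 :: "qop1 \<Rightarrow> qop1 \<Rightarrow> qop1" where
  "mult1 A B = (\<lambda>a c. \<Sum>b\<in>(UNIV::bool set). A a b * B b c)"

definition adj1 :: "qop1 \<Rightarrow> qop1" where
  "adj1 A = (\<lambda>a b. cnj (A b a))"

definition id1 :: qop1 where
  "id1 = (\<lambda>a b. if a = b then 1 else 0)"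

definition id_op :: "nat \<Rightarrow> qop" where
  "id_op n = kron n (\<lambda>_. id1)"

definition pauliX :: qop1 where
  "pauliX = (\<lambda>a b. if a \<noteq> b then 1 else 0)"

definition pauliY :: qop1 where
  "pauliY = (\<lambda>a b. if a = b then 0 else if a then \<i> else - \<i>)"

definition pauliZ :: qop1 where
  "pauliZ = (\<lambda>a b. if a = b then (if a then -1 else 1) else 0)"

text \<open>The single-qubit Pauli group: the group generated by X, Y, Z (a finite set of
invertible matrices, so closure under multiplication already yields the generated group).\<close>
inductive_set pauli_group1 :: "qop1 set" where
  genX: "pauliX \<in> pauli_group1"
| genY: "pauliY \<in> pauli_group1"
| genZ: "pauliZ \<in> pauli_group1"
| mult: "A \<in> pauli_group1 \<Longrightarrow> B \<in> pauli_group1 \<Longrightarrow> mult1 A B \<in> pauli_group1"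

definition pauli_group :: "nat \<Rightarrow> qop set" where
  "pauli_group n = {kron n Ps | Ps. \<forall>j<n. Ps j \<in> pauli_group1}"

definition unitary1 :: "qop1 \<Rightarrow> bool" where
  "unitary1 U \<longleftrightarrow> mult1 U (adj1 U) = id1 \<and> mult1 (adj1 U) U = id1"

definition clifford1 :: "qop1 \<Rightarrow> bool" where
  "clifford1 U \<longleftrightarrow> unitary1 U \<and>
     (\<lambda>P. mult1 U (mult1 P (adj1 U))) ` pauli_group1 = pauli_group1"

definition stabilizer_state :: "nat \<Rightarrow> qstate \<Rightarrow> bool" where
  "stabilizer_state n \<psi> \<longleftrightarrow> is_state n \<psi> \<and> \<psi> \<noteq> (\<lambda>_. 0) \<and>
     (\<exists>G. G \<subseteq> pauli_group n \<and>
          id_op n \<in> G \<and>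
          (\<forall>A\<in>G. \<forall>B\<in>G. mult_op n A B \<in> G) \<and>
          (\<forall>A\<in>G. \<exists>B\<in>G. mult_op n A B = id_op n) \<and>
          (\<forall>A\<in>G. \<forall>B\<in>G. mult_op n A B = mult_op n B A) \<and>
          card G = 2 ^ n \<and>
          (\<lambda>y x. - id_op n y x) \<notin> G \<and>
          (\<forall>A\<in>G. apply_op n A \<psi> = \<psi>) \<and>
          (\<forall>\<phi>. is_state n \<phi> \<and> (\<forall>A\<in>G. apply_op n A \<phi> = \<phi>) \<longrightarrow>
                (\<exists>c. \<phi> = (\<lambda>x. c * \<psi> x))))"

definition LU_equiv :: "nat \<Rightarrow> qstate \<Rightarrow> qstate \<Rightarrow> bool" where
  "LU_equiv n \<psi>0 \<psi>1 \<longleftrightarrow>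
     (\<exists>Us. (\<forall>j<n. unitary1 (Us j)) \<and> apply_op n (kron n Us) \<psi>0 = \<psi>1)"

definition LC_equiv :: "nat \<Rightarrow> qstate \<Rightarrow> qstate \<Rightarrow> bool" where
  "LC_equiv n \<psi>0 \<psi>1 \<longleftrightarrow>
     (\<exists>Us. (\<forall>j<n. clifford1 (Us j)) \<and> apply_op n (kron n Us) \<psi>0 = \<psi>1)"

definition bits :: "string \<Rightarrow> bool list" where
  "bits s = map (\<lambda>c. c = CHR ''1'') s"

definition xi :: "bool list list" where
  "xi = map bits
    [''100010001010101010100011110'',
     ''101010111001100000001010101'',
     ''011001100111100111100110011'',
     ''000111100000011001100001111'',
     ''000000011111111000011111111'',
     ''000000000000000111111111111'']"

definition f2_span :: "nat \<Rightarrow> bool list list \<Rightarrow> bool list set" where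
  "f2_span n vs = {foldr (\<lambda>(b, v) acc. if b then map2 (\<noteq>) v acc else acc)
                      (zip cs vs) (replicate n False) | cs. length cs = length vs}"

definition S27 :: "bool list set" where
  "S27 = f2_span 27 xi"

text \<open>Q(x) with x_k = x ! (k-1); Q(x)=1 iff an odd number of the monomials are 1.\<close>
definition Q27 :: "bool list \<Rightarrow> bool" where
  "Q27 x = odd (length (filter id
     [x!0 \<and> x!1, x!0 \<and> x!2, x!0 \<and> x!7, x!1 \<and> x!3,
      x!1 \<and> x!7, x!1 \<and> x!15, x!2 \<and> x!3, x!2 \<and> x!7,
      x!2 \<and> x!15, x!3 \<and> x!7, x!7 \<and> x!15]))"

definition ket_S :: qstate where
  "ket_S = (\<lambda>x. if x \<in> S27 then 1 / complex_of_real (sqrt (real (card S27))) else 0)"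

definition ket_QS :: qstate where
  "ket_QS = (\<lambda>x. if x \<in> S27
                 then (-1) ^ (if Q27 x then 1 else 0) / complex_of_real (sqrt (real (card S27)))
                 else 0)"

end

theory Submission
  imports Defs
begin


lemma finite_bitstrings[simp]: "finite (bitstrings n)"
proof -
  have "bitstrings n \<subseteq> {xs. set xs \<subseteq> UNIV \<and> length xs = n}" by (auto simp: bitstrings_def)
  thus ?thesis using finite_lists_length_eq[of "UNIV::bool set" n] by (auto intro: finite_subset)
qed

lemma card_bitstrings: "card (bitstrings n) = 2 ^ n"
proof -
  have "bitstrings n = {xs. set xs \<subseteq> (UNIV::bool set) \<and> length xs = n}" by (auto simp: bitstrings_def)
  thus ?thesis using card_lists_length_eq[of "UNIV::bool set" n] by (simp add: card_UNIV_bool)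
qed

lemma bitstrings_Suc: "bitstrings (Suc n) = Cons False ` bitstrings n \<union> Cons True ` bitstrings n"
proof
  show "bitstrings (Suc n) \<subseteq> Cons False ` bitstrings n \<union> Cons True ` bitstrings n"
  proof
    fix x assume "x \<in> bitstrings (Suc n)"
    then obtain b xs where "x = b # xs" "length xs = n" by (auto simp: bitstrings_def length_Suc_conv)
    thus "x \<in> Cons False ` bitstrings n \<union> Cons True ` bitstrings n" by (cases b) (auto simp: bitstrings_def)
  qed
qed (auto simp: bitstrings_def)

lemma sum_prod_bitstrings:
  fixes f :: "nat \<Rightarrow> bool \<Rightarrow> 'a::comm_semiring_1"
  shows "(\<Sum>x\<in>bitstrings n. \<Prod>j<n. f j (x!j)) = (\<Prod>j<n. f j False + f j True)"
proof (induction n arbitrary: f)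
  case 0
  have "bitstrings 0 = {[]}" by (auto simp: bitstrings_def)
  thus ?case by simp
next
  case (Suc n)
  have d: "Cons False ` bitstrings n \<inter> Cons True ` bitstrings n = {}" by auto
  have "(\<Sum>x\<in>bitstrings (Suc n). \<Prod>j<Suc n. f j (x!j))
      = (\<Sum>x\<in>Cons False ` bitstrings n. \<Prod>j<Suc n. f j (x!j)) + (\<Sum>x\<in>Cons True ` bitstrings n. \<Prod>j<Suc n. f j (x!j))"
    unfolding bitstrings_Suc by (rule sum.union_disjoint) (use d in auto)
  also have "\<dots> = (\<Sum>x\<in>bitstrings n. f 0 False * (\<Prod>j<n. f (Suc j) (x!j))) + (\<Sum>x\<in>bitstrings n. f 0 True * (\<Prod>j<n. f (Suc j) (x!j)))"
    by (simp add: sum.reindex prod.lessThan_Suc_shift del: prod.lessThan_Suc)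
  also have "\<dots> = (f 0 False + f 0 True) * (\<Prod>j<n. f (Suc j) False + f (Suc j) True)"
    using Suc[of "\<lambda>j. f (Suc j)"] by (simp add: sum_distrib_left[symmetric] distrib_right)
  also have "\<dots> = (\<Prod>j<Suc n. f j False + f j True)" by (simp add: prod.lessThan_Suc_shift del: prod.lessThan_Suc)
  finally show ?case .
qed

lemma mult_op_kron: "mult_op n (kron n A) (kron n B) = kron n (\<lambda>j. mult1 (A j) (B j))"
proof (intro ext)
  fix y z
  show "mult_op n (kron n A) (kron n B) y z = kron n (\<lambda>j. mult1 (A j) (B j)) y z"
  proof (cases "length y = n \<and> length z = n")
    case True
    have "mult_op n (kron n A) (kron n B) y z = (\<Sum>x\<in>bitstrings n. \<Prod>j<n. A j (y!j) (x!j) * B j (x!j) (z!j))"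
      unfolding mult_op_def kron_def using True by (intro sum.cong) (auto simp: bitstrings_def prod.distrib)
    also have "\<dots> = (\<Prod>j<n. A j (y!j) False * B j False (z!j) + A j (y!j) True * B j True (z!j))"
      by (rule sum_prod_bitstrings[where f="\<lambda>j b. A j (y!j) b * B j b (z!j)"])
    also have "\<dots> = kron n (\<lambda>j. mult1 (A j) (B j)) y z"
      using True by (simp add: kron_def mult1_def UNIV_bool add.commute)
    finally show ?thesis .
  next
    case False
    then show ?thesis by (auto simp: mult_op_def kron_def bitstrings_def intro!: sum.neutral)
  qed
qed

lemma apply_apply: "apply_op n A (apply_op n B \<psi>) = apply_op n (mult_op n A B) \<psi>"
proof (intro ext)
  fix y
  show "apply_op n A (apply_op n B \<psi>) y = apply_op n (mult_op n A B) \<psi> y"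
  proof (cases "length y = n")
    case True
    have "apply_op n A (apply_op n B \<psi>) y = (\<Sum>x\<in>bitstrings n. A y x * (\<Sum>z\<in>bitstrings n. B x z * \<psi> z))"
      using True by (auto simp: apply_op_def bitstrings_def intro!: sum.cong)
    also have "\<dots> = (\<Sum>x\<in>bitstrings n. \<Sum>z\<in>bitstrings n. A y x * B x z * \<psi> z)"
      by (simp add: sum_distrib_left mult.assoc)
    also have "\<dots> = (\<Sum>z\<in>bitstrings n. \<Sum>x\<in>bitstrings n. A y x * B x z * \<psi> z)" by (rule sum.swap)
    also have "\<dots> = apply_op n (mult_op n A B) \<psi> y"
      using True by (simp add: apply_op_def mult_op_def sum_distrib_right)
    finally show ?thesis .
  qed (simp add: apply_op_def)
qed

definition xorv :: "bool list \<Rightarrow> bool list \<Rightarrow> bool list" where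
  "xorv u v = map2 (\<noteq>) u v"

lemma length_xorv[simp]: "length (xorv u v) = min (length u) (length v)"
  by (simp add: xorv_def)

lemma nth_xorv[simp]: "j < length u \<Longrightarrow> j < length v \<Longrightarrow> xorv u v ! j = (u!j \<noteq> v!j)"
  by (simp add: xorv_def)

lemma mono_apply:
  assumes M: "\<And>j u v. j < n \<Longrightarrow> u \<noteq> (v \<noteq> \<alpha>!j) \<Longrightarrow> M j u v = 0"
    and la: "length \<alpha> = n" and ly: "length y = n"
  shows "apply_op n (kron n M) \<psi> y = (\<Prod>j<n. M j (y!j) (y!j \<noteq> \<alpha>!j)) * \<psi> (xorv y \<alpha>)"
proof -
  let ?x = "xorv y \<alpha>"
  have xin: "?x \<in> bitstrings n" using la ly by (simp add: bitstrings_def)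
  have "apply_op n (kron n M) \<psi> y = (\<Sum>x\<in>bitstrings n. kron n M y x * \<psi> x)"
    using ly by (simp add: apply_op_def)
  also have "\<dots> = kron n M y ?x * \<psi> ?x + (\<Sum>x\<in>bitstrings n - {?x}. kron n M y x * \<psi> x)"
    using xin by (simp add: sum.remove)
  also have "(\<Sum>x\<in>bitstrings n - {?x}. kron n M y x * \<psi> x) = 0"
  proof (rule sum.neutral, rule ballI)
    fix x assume x: "x \<in> bitstrings n - {?x}"
    then have lx: "length x = n" by (simp add: bitstrings_def)
    have "x \<noteq> ?x" using x by simp
    then obtain j where j: "j < n" "x!j \<noteq> ?x!j"
      using lx la ly by (auto simp: list_eq_iff_nth_eq)
    then have j0: "M j (y!j) (x!j) = 0" using M[of j "y!j" "x!j"] la ly by (auto simp: xorv_def)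
    have "(\<Prod>j<n. M j (y!j) (x!j)) = 0"
      by (rule prod_zero) (use j(1) j0 in blast)+
    then show "kron n M y x * \<psi> x = 0" using lx ly by (simp add: kron_def)
  qed
  also have "kron n M y ?x = (\<Prod>j<n. M j (y!j) (y!j \<noteq> \<alpha>!j))"
    using la ly by (simp add: kron_def)
  finally show ?thesis by simp
qed


definition U4 :: "complex set" where "U4 = {1, -1, \<i>, - \<i>}"
definition B4 :: "qop1 set" where "B4 = {id1, pauliX, pauliY, pauliZ}"
definition PG16 :: "qop1 set" where
  "PG16 = {(\<lambda>a b. c * P a b) | c P. c \<in> U4 \<and> P \<in> B4}"

lemma U4_mult: "c \<in> U4 \<Longrightarrow> d \<in> U4 \<Longrightarrow> c * d \<in> U4"
  by (auto simp: U4_def)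

lemma tab_0_0: "mult1 id1 id1 = (\<lambda>a b. (1) * id1 a b)"
  by (auto simp: fun_eq_iff mult1_def id1_def pauliX_def pauliY_def pauliZ_def UNIV_bool)

lemma tab_0_1: "mult1 id1 pauliX = (\<lambda>a b. (1) * pauliX a b)"
  by (auto simp: fun_eq_iff mult1_def id1_def pauliX_def pauliY_def pauliZ_def UNIV_bool)

lemma tab_0_2: "mult1 id1 pauliY = (\<lambda>a b. (1) * pauliY a b)"
  by (auto simp: fun_eq_iff mult1_def id1_def pauliX_def pauliY_def pauliZ_def UNIV_bool)

lemma tab_0_3: "mult1 id1 pauliZ = (\<lambda>a b. (1) * pauliZ a b)"
  by (auto simp: fun_eq_iff mult1_def id1_def pauliX_def pauliY_def pauliZ_def UNIV_bool)

lemma tab_1_0: "mult1 pauliX id1 = (\<lambda>a b. (1) * pauliX a b)"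
  by (auto simp: fun_eq_iff mult1_def id1_def pauliX_def pauliY_def pauliZ_def UNIV_bool)

lemma tab_1_1: "mult1 pauliX pauliX = (\<lambda>a b. (1) * id1 a b)"
  by (auto simp: fun_eq_iff mult1_def id1_def pauliX_def pauliY_def pauliZ_def UNIV_bool)

lemma tab_1_2: "mult1 pauliX pauliY = (\<lambda>a b. (\<i>) * pauliZ a b)"
  by (auto simp: fun_eq_iff mult1_def id1_def pauliX_def pauliY_def pauliZ_def UNIV_bool)

lemma tab_1_3: "mult1 pauliX pauliZ = (\<lambda>a b. (- \<i>) * pauliY a b)"
  by (auto simp: fun_eq_iff mult1_def id1_def pauliX_def pauliY_def pauliZ_def UNIV_bool)

lemma tab_2_0: "mult1 pauliY id1 = (\<lambda>a b. (1) * pauliY a b)"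
  by (auto simp: fun_eq_iff mult1_def id1_def pauliX_def pauliY_def pauliZ_def UNIV_bool)

lemma tab_2_1: "mult1 pauliY pauliX = (\<lambda>a b. (- \<i>) * pauliZ a b)"
  by (auto simp: fun_eq_iff mult1_def id1_def pauliX_def pauliY_def pauliZ_def UNIV_bool)

lemma tab_2_2: "mult1 pauliY pauliY = (\<lambda>a b. (1) * id1 a b)"
  by (auto simp: fun_eq_iff mult1_def id1_def pauliX_def pauliY_def pauliZ_def UNIV_bool)

lemma tab_2_3: "mult1 pauliY pauliZ = (\<lambda>a b. (\<i>) * pauliX a b)"
  by (auto simp: fun_eq_iff mult1_def id1_def pauliX_def pauliY_def pauliZ_def UNIV_bool)

lemma tab_3_0: "mult1 pauliZ id1 = (\<lambda>a b. (1) * pauliZ a b)"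
  by (auto simp: fun_eq_iff mult1_def id1_def pauliX_def pauliY_def pauliZ_def UNIV_bool)

lemma tab_3_1: "mult1 pauliZ pauliX = (\<lambda>a b. (\<i>) * pauliY a b)"
  by (auto simp: fun_eq_iff mult1_def id1_def pauliX_def pauliY_def pauliZ_def UNIV_bool)

lemma tab_3_2: "mult1 pauliZ pauliY = (\<lambda>a b. (- \<i>) * pauliX a b)"
  by (auto simp: fun_eq_iff mult1_def id1_def pauliX_def pauliY_def pauliZ_def UNIV_bool)

lemma tab_3_3: "mult1 pauliZ pauliZ = (\<lambda>a b. (1) * id1 a b)"
  by (auto simp: fun_eq_iff mult1_def id1_def pauliX_def pauliY_def pauliZ_def UNIV_bool)

lemma B4_mult: "P \<in> B4 \<Longrightarrow> R \<in> B4 \<Longrightarrow> \<exists>e\<in>U4. \<exists>T\<in>B4. mult1 P R = (\<lambda>a b. e * T a b)"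
proof -
  have t00: "\<exists>e\<in>U4. \<exists>T\<in>B4. mult1 id1 id1 = (\<lambda>a b. e * T a b)"
    by (rule bexI[of _ "1"], rule bexI[of _ id1]) (simp_all only: tab_0_0, simp_all add: U4_def B4_def)
  have t01: "\<exists>e\<in>U4. \<exists>T\<in>B4. mult1 id1 pauliX = (\<lambda>a b. e * T a b)"
    by (rule bexI[of _ "1"], rule bexI[of _ pauliX]) (simp_all only: tab_0_1, simp_all add: U4_def B4_def)
  have t02: "\<exists>e\<in>U4. \<exists>T\<in>B4. mult1 id1 pauliY = (\<lambda>a b. e * T a b)"
    by (rule bexI[of _ "1"], rule bexI[of _ pauliY]) (simp_all only: tab_0_2, simp_all add: U4_def B4_def)
  have t03: "\<exists>e\<in>U4. \<exists>T\<in>B4. mult1 id1 pauliZ = (\<lambda>a b. e * T a b)"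
    by (rule bexI[of _ "1"], rule bexI[of _ pauliZ]) (simp_all only: tab_0_3, simp_all add: U4_def B4_def)
  have t10: "\<exists>e\<in>U4. \<exists>T\<in>B4. mult1 pauliX id1 = (\<lambda>a b. e * T a b)"
    by (rule bexI[of _ "1"], rule bexI[of _ pauliX]) (simp_all only: tab_1_0, simp_all add: U4_def B4_def)
  have t11: "\<exists>e\<in>U4. \<exists>T\<in>B4. mult1 pauliX pauliX = (\<lambda>a b. e * T a b)"
    by (rule bexI[of _ "1"], rule bexI[of _ id1]) (simp_all only: tab_1_1, simp_all add: U4_def B4_def)
  have t12: "\<exists>e\<in>U4. \<exists>T\<in>B4. mult1 pauliX pauliY = (\<lambda>a b. e * T a b)"
    by (rule bexI[of _ "\<i>"], rule bexI[of _ pauliZ]) (simp_all only: tab_1_2, simp_all add: U4_def B4_def)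
  have t13: "\<exists>e\<in>U4. \<exists>T\<in>B4. mult1 pauliX pauliZ = (\<lambda>a b. e * T a b)"
    by (rule bexI[of _ "- \<i>"], rule bexI[of _ pauliY]) (simp_all only: tab_1_3, simp_all add: U4_def B4_def)
  have t20: "\<exists>e\<in>U4. \<exists>T\<in>B4. mult1 pauliY id1 = (\<lambda>a b. e * T a b)"
    by (rule bexI[of _ "1"], rule bexI[of _ pauliY]) (simp_all only: tab_2_0, simp_all add: U4_def B4_def)
  have t21: "\<exists>e\<in>U4. \<exists>T\<in>B4. mult1 pauliY pauliX = (\<lambda>a b. e * T a b)"
    by (rule bexI[of _ "- \<i>"], rule bexI[of _ pauliZ]) (simp_all only: tab_2_1, simp_all add: U4_def B4_def)
  have t22: "\<exists>e\<in>U4. \<exists>T\<in>B4. mult1 pauliY pauliY = (\<lambda>a b. e * T a b)"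
    by (rule bexI[of _ "1"], rule bexI[of _ id1]) (simp_all only: tab_2_2, simp_all add: U4_def B4_def)
  have t23: "\<exists>e\<in>U4. \<exists>T\<in>B4. mult1 pauliY pauliZ = (\<lambda>a b. e * T a b)"
    by (rule bexI[of _ "\<i>"], rule bexI[of _ pauliX]) (simp_all only: tab_2_3, simp_all add: U4_def B4_def)
  have t30: "\<exists>e\<in>U4. \<exists>T\<in>B4. mult1 pauliZ id1 = (\<lambda>a b. e * T a b)"
    by (rule bexI[of _ "1"], rule bexI[of _ pauliZ]) (simp_all only: tab_3_0, simp_all add: U4_def B4_def)
  have t31: "\<exists>e\<in>U4. \<exists>T\<in>B4. mult1 pauliZ pauliX = (\<lambda>a b. e * T a b)"
    by (rule bexI[of _ "\<i>"], rule bexI[of _ pauliY]) (simp_all only: tab_3_1, simp_all add: U4_def B4_def)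
  have t32: "\<exists>e\<in>U4. \<exists>T\<in>B4. mult1 pauliZ pauliY = (\<lambda>a b. e * T a b)"
    by (rule bexI[of _ "- \<i>"], rule bexI[of _ pauliX]) (simp_all only: tab_3_2, simp_all add: U4_def B4_def)
  have t33: "\<exists>e\<in>U4. \<exists>T\<in>B4. mult1 pauliZ pauliZ = (\<lambda>a b. e * T a b)"
    by (rule bexI[of _ "1"], rule bexI[of _ id1]) (simp_all only: tab_3_3, simp_all add: U4_def B4_def)
  assume "P \<in> B4" "R \<in> B4"
  then have "P = id1 \<or> P = pauliX \<or> P = pauliY \<or> P = pauliZ" "R = id1 \<or> R = pauliX \<or> R = pauliY \<or> R = pauliZ"
    by (auto simp: B4_def)
  then show ?thesis
    apply (elim disjE)
    using t00 t01 t02 t03 t10 t11 t12 t13 t20 t21 t22 t23 t30 t31 t32 t33 by simp_all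
qed

lemma mult1_scale: "mult1 (\<lambda>a b. c * P a b) (\<lambda>a b. d * R a b) = (\<lambda>a b. (c * d) * mult1 P R a b)"
  by (simp add: fun_eq_iff mult1_def sum_distrib_left mult_ac)

lemma pauli_group1_sub: "pauli_group1 \<subseteq> PG16"
proof
  fix M assume "M \<in> pauli_group1"
  then show "M \<in> PG16"
  proof induction
    case genX
    then show ?case unfolding PG16_def by (intro CollectI exI[of _ 1] exI[of _ pauliX]) (simp add: U4_def B4_def)
  next
    case genY
    then show ?case unfolding PG16_def by (intro CollectI exI[of _ 1] exI[of _ pauliY]) (simp add: U4_def B4_def)
  next
    case genZ
    then show ?case unfolding PG16_def by (intro CollectI exI[of _ 1] exI[of _ pauliZ]) (simp add: U4_def B4_def)
  next
    case (mult A B)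
    from mult.IH obtain c P d R where A: "A = (\<lambda>a b. c * P a b)" "c \<in> U4" "P \<in> B4"
      and B: "B = (\<lambda>a b. d * R a b)" "d \<in> U4" "R \<in> B4" unfolding PG16_def by blast
    obtain e T where eT: "e \<in> U4" "T \<in> B4" "mult1 P R = (\<lambda>a b. e * T a b)" using B4_mult[OF A(3) B(3)] by blast
    have "mult1 A B = (\<lambda>a b. (c * d * e) * T a b)" using A(1) B(1) eT(3) by (simp add: mult1_scale mult_ac)
    moreover have "c * d * e \<in> U4" using A(2) B(2) eT(1) by (intro U4_mult)
    ultimately show ?case using eT(2) unfolding PG16_def by blast
  qed
qed

lemma PG16_cases:
  assumes "M \<in> PG16"
  obtains c where "c \<in> U4" "M = (\<lambda>a b. c * id1 a b)" | c where "c \<in> U4" "M = (\<lambda>a b. c * pauliX a b)"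
    | c where "c \<in> U4" "M = (\<lambda>a b. c * pauliY a b)" | c where "c \<in> U4" "M = (\<lambda>a b. c * pauliZ a b)"
  using assms unfolding PG16_def B4_def by blast

lemma U4_cases: "c \<in> U4 \<Longrightarrow> c = 1 \<or> c = -1 \<or> c = \<i> \<or> c = - \<i>"
  by (auto simp: U4_def)

lemma PG16_support:
  assumes "M \<in> PG16"
  shows "\<And>u v. u \<noteq> (v \<noteq> (M True False \<noteq> 0)) \<Longrightarrow> M u v = 0"
    and "\<And>v. M (v \<noteq> (M True False \<noteq> 0)) v \<noteq> 0"
  using assms
  by (auto elim!: PG16_cases dest!: U4_cases simp: id1_def pauliX_def pauliY_def pauliZ_def split: if_splits)

lemma PG16_pow4:
  assumes "M \<in> PG16"
  shows "M u v = 0 \<or> (M u v) ^ 4 = 1"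
proof -
  have i4: "\<i> ^ 4 = (1::complex)" by (simp add: power_mult[of _ 2 2, simplified])
  show ?thesis using assms
    by (auto elim!: PG16_cases dest!: U4_cases simp: id1_def pauliX_def pauliY_def pauliZ_def i4 split: if_splits)
qed

lemma PG16_diag:
  assumes "M \<in> PG16" "M True False = 0"
  shows "\<exists>c\<in>U4. M = (\<lambda>a b. c * id1 a b) \<or> M = (\<lambda>a b. c * pauliZ a b)"
  using assms(1)
proof (cases rule: PG16_cases)
  case (2 c) then show ?thesis using assms(2) by (auto simp: pauliX_def U4_def)
next
  case (3 c) then show ?thesis using assms(2) by (auto simp: pauliY_def U4_def)
qed blast+


definition lc :: "nat \<Rightarrow> bool list \<Rightarrow> bool list list \<Rightarrow> bool list" where
 "lc n cs vs = foldr (\<lambda>(b, v) acc. if b then map2 (\<noteq>) v acc else acc) (zip cs vs) (replicate n False)"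

definition par :: "bool list \<Rightarrow> bool list \<Rightarrow> bool" where
  "par b x = odd (length (filter id (map2 (\<and>) b x)))"

definition sgnc :: "bool list \<Rightarrow> bool list \<Rightarrow> complex" where
  "sgnc b x = (if par b x then -1 else 1)"

definition beta :: "bool list list" where
  "beta = map bits
    [''100110000000000000000000000'',
     ''010101000000000000000000000'',
     ''001100100000000000000000000'',
     ''111000011000000000000000000'',
     ''001000010100000000000000000'',
     ''110000010010000000000000000'',
     ''010000010001000000000000000'',
     ''101000010000100000000000000'',
     ''011100010000010000000000000'',
     ''100100010000001000000000000'',
     ''111000000000000110000000000'',
     ''000100000000000101000000000'',
     ''111100000000000100100000000'',
     ''001000010000000100010000000'',
     ''010000010000000100001000000'',
     ''011000010000000100000100000'',
     ''111000010000000100000010000'',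
     ''110100010000000100000001000'',
     ''101100010000000100000000100'',
     ''100100010000000100000000010'',
     ''000100010000000100000000001'']"
definition piv :: "nat list" where "piv = [0, 1, 2, 3, 7, 15]"
definition npv :: "nat list" where "npv = [4, 5, 6, 8, 9, 10, 11, 12, 13, 14, 16, 17, 18, 19, 20, 21, 22, 23, 24, 25, 26]"

definition Slist where "Slist = map (\<lambda>cs. lc 27 cs xi) (List.n_lists 6 [False,True])"
definition Sp :: "bool list set" where "Sp = {lc 27 ds beta | ds. length ds = 21}"


lemma S27_eq: "S27 = set Slist"
  unfolding S27_def f2_span_def Slist_def lc_def
  by (auto simp: set_n_lists xi_def)

lemma len_xi: "length xi = 6" "\<forall>v\<in>set xi. length v = 27" by (simp_all add: xi_def bits_def)
lemma S27_lc: "S27 = {lc 27 cs xi | cs. length cs = 6}"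
  by (simp add: S27_def f2_span_def lc_def len_xi)
lemma len_beta: "length beta = 21" "\<forall>v\<in>set beta. length v = 27" by (simp_all add: beta_def bits_def)

lemma c2: "\<forall>k<21. \<forall>s\<in>set Slist. \<not> par (beta!k) s" by code_simp
lemma c3: "\<forall>cs\<in>set (List.n_lists 6 [False,True]). lc 27 cs xi = replicate 27 False \<longrightarrow> cs = replicate 6 False" by code_simp
lemma c4: "\<forall>k<21. map (\<lambda>v. v ! (npv!k)) beta = (replicate 21 False)[k:=True]" by code_simp
lemma c5: "\<forall>p\<in>set (List.n_lists 6 [False,True]). \<exists>s\<in>set Slist. map (nth s) piv = p" by code_simp
lemma c6: "\<forall>k<21. \<forall>j<27. beta!k!j \<longrightarrow> j \<in> set piv \<or> j = npv!k" by code_simp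
lemma c7: "\<forall>j<27. j \<in> set piv \<or> j \<in> set npv" by code_simp
lemma c8: "length npv = 21" "length piv = 6" "\<forall>j\<in>set piv. j < 27" by code_simp+


lemma lc_Nil1[simp]: "lc n [] vs = replicate n False" by (simp add: lc_def)
lemma lc_Nil2[simp]: "lc n cs [] = replicate n False" by (simp add: lc_def)
lemma lc_Cons[simp]: "lc n (c#cs) (v#vs) = (if c then map2 (\<noteq>) v (lc n cs vs) else lc n cs vs)"
  by (simp add: lc_def)

lemma par_Nil1[simp]: "par [] x = False" by (simp add: par_def)
lemma par_Nil2[simp]: "par b [] = False" by (simp add: par_def)
lemma par_Cons[simp]: "par (b#bs) (x#xs) = ((b \<and> x) \<noteq> par bs xs)" by (cases b; cases x) (simp_all add: par_def)

lemma par_sym: "par b x = par x b"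
proof (induction b arbitrary: x)
  case Nil then show ?case by simp
next
  case (Cons a b) then show ?case by (cases x) (auto simp: conj_commute)
qed

lemma par_xor1: "length b1 = length b2 \<Longrightarrow> par (xorv b1 b2) x = (par b1 x \<noteq> par b2 x)"
proof (induction b1 arbitrary: b2 x)
  case Nil then show ?case by (simp add: xorv_def)
next
  case (Cons a b1)
  then obtain c b2' where b2: "b2 = c # b2'" by (cases b2) auto
  show ?case
  proof (cases x)
    case Nil then show ?thesis by (simp add: xorv_def)
  next
    case (Cons z x')
    then show ?thesis using Cons.IH[of b2' x'] Cons.prems b2 by (auto simp: xorv_def)
  qed
qed

lemma par_xor2: "length x1 = length x2 \<Longrightarrow> par b (xorv x1 x2) = (par b x1 \<noteq> par b x2)"
  using par_xor1[of x1 x2 b] by (simp add: par_sym)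

lemma par_replicate[simp]: "par (replicate n False) x = False"
proof (induction n arbitrary: x)
  case 0 then show ?case by simp
next
  case (Suc n) then show ?case by (cases x) auto
qed

lemma par_replicate2[simp]: "par x (replicate n False) = False"
  using par_replicate par_sym by metis

lemma length_lc: "\<forall>v\<in>set vs. length v = n \<Longrightarrow> length (lc n cs vs) = n"
proof (induction vs arbitrary: cs)
  case Nil then show ?case by simp
next
  case (Cons v vs) then show ?case by (cases cs) auto
qed

lemma lc_nth: "\<forall>v\<in>set vs. length v = n \<Longrightarrow> j < n \<Longrightarrow> length cs = length vs \<Longrightarrow>
    lc n cs vs ! j = par cs (map (\<lambda>v. v!j) vs)"
proof (induction vs arbitrary: cs)
  case Nil then show ?case by simp
next
  case (Cons v vs)
  then obtain c cs' where cs: "cs = c # cs'" by (cases cs) auto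
  have l: "length (lc n cs' vs) = n" using Cons.prems length_lc by auto
  show ?case using Cons.IH[of cs'] Cons.prems cs l by auto
qed

lemma lc_xor:
  assumes "\<forall>v\<in>set vs. length v = n" "length cs = length vs" "length ds = length vs"
  shows "xorv (lc n cs vs) (lc n ds vs) = lc n (xorv cs ds) vs"
proof (rule nth_equalityI)
  show "length (xorv (lc n cs vs) (lc n ds vs)) = length (lc n (xorv cs ds) vs)"
    using assms length_lc by simp
next
  fix j assume "j < length (xorv (lc n cs vs) (lc n ds vs))"
  then have j: "j < n" using assms length_lc by simp
  then show "xorv (lc n cs vs) (lc n ds vs) ! j = lc n (xorv cs ds) vs ! j"
    using assms length_lc[OF assms(1)] by (simp add: lc_nth par_xor1)
qed

lemma lc_zero: "\<forall>v\<in>set vs. length v = n \<Longrightarrow> lc n (replicate (length vs) False) vs = replicate n False"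
  by (rule nth_equalityI) (simp_all add: length_lc lc_nth)

lemma par_lc:
  assumes "\<forall>v\<in>set vs. length v = n" "length x = n" "\<forall>v\<in>set vs. \<not> par v x"
  shows "\<not> par (lc n cs vs) x"
  using assms
proof (induction vs arbitrary: cs)
  case Nil then show ?case by (simp add: par_sym)
next
  case (Cons v vs)
  show ?case
  proof (cases cs)
    case Nil then show ?thesis by (simp add: par_sym)
  next
    case (Cons c cs')
    have l: "length (lc n cs' vs) = n" using Cons.prems length_lc by auto
    have "\<not> par (lc n cs' vs) x" using Cons.IH Cons.prems by auto
    moreover have "\<not> par v x" using Cons.prems by auto
    moreover have "par (map2 (\<noteq>) v (lc n cs' vs)) x = (par v x \<noteq> par (lc n cs' vs) x)"
      using par_xor1[of v "lc n cs' vs" x] l Cons.prems by (simp add: xorv_def)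
    ultimately show ?thesis using Cons by simp
  qed
qed

lemma par_unit: "length cs = m \<Longrightarrow> k < m \<Longrightarrow> par cs ((replicate m False)[k:=True]) = cs!k"
proof (induction cs arbitrary: m k)
  case Nil then show ?case by simp
next
  case (Cons c cs)
  then obtain m' where m: "m = Suc m'" by auto
  show ?case
  proof (cases k)
    case 0 then show ?thesis using m Cons by simp
  next
    case (Suc k') then show ?thesis using m Cons by simp
  qed
qed

lemma par_card: "par v z = odd (card {j. j < length v \<and> j < length z \<and> v!j \<and> z!j})"
  unfolding par_def length_filter_conv_card
  by (rule arg_cong[where f="\<lambda>S. odd (card S)"]) auto

lemma prod_sign:
  "length b = n \<Longrightarrow> length x = n \<Longrightarrow> (\<Prod>j<n. if b!j \<and> x!j then -1 else 1 :: complex) = sgnc b x"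
proof (induction b arbitrary: x n)
  case Nil then show ?case by (simp add: sgnc_def)
next
  case (Cons c b)
  then obtain z x' n' where x: "x = z # x'" "n = Suc n'" by (cases x) auto
  have "(\<Prod>j<n. if (c#b)!j \<and> x!j then -1 else 1 :: complex)
     = (if c \<and> z then -1 else 1) * (\<Prod>j<n'. if b!j \<and> x'!j then -1 else 1)"
    using x by (simp add: prod.lessThan_Suc_shift del: prod.lessThan_Suc)
  also have "\<dots> = (if c \<and> z then -1 else 1) * sgnc b x'" using Cons x by simp
  also have "\<dots> = sgnc (c#b) x" using x by (simp add: sgnc_def)
  finally show ?case .
qed


lemma lenS: "y \<in> S27 \<Longrightarrow> length y = 27"
  using len_xi by (auto simp: S27_lc length_lc)

lemma lenSp: "y \<in> Sp \<Longrightarrow> length y = 27"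
  using len_beta by (auto simp: Sp_def length_lc)

lemma S_xor: assumes "a \<in> S27" "b \<in> S27" shows "xorv a b \<in> S27"
proof -
  obtain cs ds where "a = lc 27 cs xi" "length cs = 6" "b = lc 27 ds xi" "length ds = 6"
    using assms by (auto simp: S27_lc)
  then have "xorv a b = lc 27 (xorv cs ds) xi" "length (xorv cs ds) = 6"
    using lc_xor[of xi 27 cs ds] len_xi by auto
  then show ?thesis by (auto simp: S27_lc)
qed

lemma Sp_xor: assumes "a \<in> Sp" "b \<in> Sp" shows "xorv a b \<in> Sp"
proof -
  obtain cs ds where "a = lc 27 cs beta" "length cs = 21" "b = lc 27 ds beta" "length ds = 21"
    using assms by (auto simp: Sp_def)
  then have "xorv a b = lc 27 (xorv cs ds) beta" "length (xorv cs ds) = 21"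
    using lc_xor[of beta 27 cs ds] len_beta by auto
  then show ?thesis by (auto simp: Sp_def)
qed

lemma zero_S: "replicate 27 False \<in> S27"
proof -
  have "lc 27 (replicate 6 False) xi = replicate 27 False" using lc_zero[of xi 27] len_xi by simp
  then show ?thesis unfolding S27_lc by (intro CollectI exI[of _ "replicate 6 False"]) simp
qed

lemma zero_Sp: "replicate 27 False \<in> Sp"
proof -
  have "lc 27 (replicate 21 False) beta = replicate 27 False" using lc_zero[of beta 27] len_beta by simp
  then show ?thesis unfolding Sp_def by (intro CollectI exI[of _ "replicate 21 False"]) simp
qed

lemma perp: assumes "a \<in> S27" "b \<in> Sp" shows "\<not> par b a"
proof -
  obtain ds where b: "b = lc 27 ds beta" using assms by (auto simp: Sp_def)
  have "\<forall>v\<in>set beta. \<not> par v a"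
  proof
    fix v assume "v \<in> set beta"
    then obtain k where "k < 21" "v = beta!k" using len_beta by (auto simp: in_set_conv_nth)
    then show "\<not> par v a" using c2 assms(1) S27_eq by auto
  qed
  then show ?thesis using par_lc[of beta 27 a ds] len_beta lenS[OF assms(1)] b by auto
qed

lemma S_inj: assumes "lc 27 cs xi = lc 27 cs' xi" "length cs = 6" "length cs' = 6" shows "cs = cs'"
proof -
  have "lc 27 (xorv cs cs') xi = xorv (lc 27 cs xi) (lc 27 cs' xi)"
    using lc_xor[of xi 27 cs cs'] len_xi assms by auto
  also have "\<dots> = replicate 27 False" using assms(1) length_lc[of xi 27 cs'] len_xi
    by (intro nth_equalityI) auto
  moreover have "length (xorv cs cs') = 6 \<and> set (xorv cs cs') \<subseteq> {False, True}" using assms by auto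
  ultimately have "xorv cs cs' = replicate 6 False"
    using c3 by (auto simp: set_n_lists)
  then show ?thesis using assms
    by (intro nth_equalityI) (auto simp: list_eq_iff_nth_eq)
qed

lemma lc_beta_nth: "length ds = 21 \<Longrightarrow> k < 21 \<Longrightarrow> lc 27 ds beta ! (npv!k) = ds!k"
proof -
  assume a: "length ds = 21" "k < 21"
  have "npv!k < 27" using a(2) by (simp add: npv_def nth_Cons split: nat.split)
  then have "lc 27 ds beta ! (npv!k) = par ds (map (\<lambda>v. v ! (npv!k)) beta)"
    using lc_nth[of beta 27 "npv!k" ds] len_beta a by auto
  also have "\<dots> = ds!k" using c4 a par_unit by auto
  finally show ?thesis .
qed

lemma Sp_inj: assumes "lc 27 ds beta = lc 27 ds' beta" "length ds = 21" "length ds' = 21" shows "ds = ds'"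
proof (rule nth_equalityI)
  fix k assume "k < length ds"
  then show "ds!k = ds'!k" using lc_beta_nth[of ds k] lc_beta_nth[of ds' k] assms by auto
qed (use assms in simp)

lemma beta_in_Sp: assumes "k < 21" shows "beta!k \<in> Sp"
proof -
  let ?u = "(replicate 21 False)[k:=True]"
  have "lc 27 ?u beta = beta!k"
  proof (rule nth_equalityI)
    show "length (lc 27 ?u beta) = length (beta!k)" using len_beta assms by (simp add: length_lc)
  next
    fix j assume "j < length (lc 27 ?u beta)"
    then have j: "j < 27" using len_beta by (simp add: length_lc)
    have "lc 27 ?u beta ! j = par ?u (map (\<lambda>v. v!j) beta)" using lc_nth[of beta 27 j ?u] j len_beta by simp
    also have "\<dots> = (map (\<lambda>v. v!j) beta) ! k" using par_sym par_unit[of "map (\<lambda>v. v!j) beta" 21 k] assms len_beta by simp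
    finally show "lc 27 ?u beta ! j = beta!k!j" using assms len_beta by simp
  qed
  then show ?thesis unfolding Sp_def by (intro CollectI exI[of _ ?u]) simp
qed

lemma piv_lt: "j \<in> set piv \<Longrightarrow> j < 27" using c8 by auto

lemma perpperp:
  assumes ly: "length y = 27" and ort: "\<And>k. k < 21 \<Longrightarrow> \<not> par (beta!k) y"
  shows "y \<in> S27"
proof -
  have "map (nth y) piv \<in> set (List.n_lists 6 [False,True])" using c8 by (auto simp: set_n_lists)
  then obtain s where s: "s \<in> set Slist" "map (nth s) piv = map (nth y) piv" using c5 by metis
  have sS: "s \<in> S27" using s S27_eq by simp
  have ls: "length s = 27" using lenS[OF sS] .
  let ?z = "xorv y s"
  have lz: "length ?z = 27" using ly ls by simp
  have zpiv: "\<And>j. j \<in> set piv \<Longrightarrow> \<not> ?z!j"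
  proof -
    fix j assume j: "j \<in> set piv"
    then have "s!j = y!j" using s(2) by (auto simp: list_eq_iff_nth_eq in_set_conv_nth)
    then show "\<not> ?z!j" using piv_lt[OF j] ly ls by simp
  qed
  have znp: "\<not> ?z!(npv!k)" if k: "k < 21" for k
  proof -
    have "\<not> par (beta!k) ?z"
      using par_xor2[of y s "beta!k"] ly ls ort[OF k] perp[OF sS beta_in_Sp[OF k]] by simp
    moreover have lb: "length (beta!k) = 27" using len_beta k by simp
    moreover have npk: "npv!k < 27" using k by (simp add: npv_def nth_Cons split: nat.split)
    moreover have bk: "beta!k!(npv!k)" using c4 k len_beta(1)
      by (metis (no_types, lifting) length_replicate nth_list_update_eq nth_map)
    moreover have sub: "{j. j < length (beta!k) \<and> j < length ?z \<and> beta!k!j \<and> ?z!j} \<subseteq> {npv!k}"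
      using c6 k zpiv lb lz by auto
    ultimately show ?thesis
    proof (cases "?z!(npv!k)")
      case True
      with sub npk lb lz bk have "{j. j < length (beta!k) \<and> j < length ?z \<and> beta!k!j \<and> ?z!j} = {npv!k}" by auto
      then have "par (beta!k) ?z" by (simp add: par_card)
      then show ?thesis using \<open>\<not> par (beta!k) ?z\<close> by simp
    qed simp
  qed
  have "?z = replicate 27 False"
  proof (rule nth_equalityI)
    fix j assume "j < length ?z"
    then have j: "j < 27" using lz by linarith
    then consider "j \<in> set piv" | "j \<in> set npv" using c7 by auto
    then show "?z!j = replicate 27 False ! j"
    proof cases
      case 1 then show ?thesis using zpiv j by simp
    next
      case 2 then obtain k where "k < 21" "j = npv!k" using c8 by (auto simp: in_set_conv_nth)
      then show ?thesis using znp j by simp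
    qed
  qed (use lz in simp)
  then have "y = s" using ly ls by (auto simp: list_eq_iff_nth_eq)
  then show ?thesis using sS by simp
qed


definition pz :: "bool \<Rightarrow> bool \<Rightarrow> qop1" where
  "pz a b = (\<lambda>u v. if u = (v \<noteq> a) then (if b \<and> v then -1 else 1) else 0)"

definition PZ :: "bool list \<Rightarrow> bool list \<Rightarrow> qop" where
  "PZ a b = kron 27 (\<lambda>j. pz (a!j) (b!j))"

definition zero27 :: "bool list" where "zero27 = replicate 27 False"

lemma id1_in: "id1 \<in> pauli_group1"
proof -
  have "mult1 pauliX pauliX = id1" by (simp add: tab_1_1)
  then show ?thesis using pauli_group1.mult[OF pauli_group1.genX pauli_group1.genX] by simp
qed

lemma pz_in: "pz a b \<in> pauli_group1"
proof -
  have "pz False False = id1" "pz True False = pauliX" "pz False True = pauliZ" "pz True True = mult1 pauliX pauliZ"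
    by (auto simp: fun_eq_iff pz_def id1_def pauliX_def pauliZ_def mult1_def UNIV_bool)
  then show ?thesis using id1_in pauli_group1.intros by (cases a; cases b) auto
qed

lemma mult1_pz: "mult1 (pz a b) (pz a' b') = (\<lambda>u v. (if b \<and> a' then -1 else 1) * pz (a \<noteq> a') (b \<noteq> b') u v)"
  by (cases a; cases b; cases a'; cases b') (auto simp: fun_eq_iff pz_def mult1_def UNIV_bool)

lemma kron_scale: "kron n (\<lambda>j u v. c j * M j u v) = (\<lambda>y x. (\<Prod>j<n. c j) * kron n M y x)"
  by (simp add: fun_eq_iff kron_def prod.distrib)

lemma xorv_comm: "xorv a b = xorv b a" by (auto simp: xorv_def list_eq_iff_nth_eq)

lemma xorv_cancel: "length y = length a \<Longrightarrow> xorv (xorv y a) a = y"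
  by (auto simp: list_eq_iff_nth_eq)

lemma xorv_self: "xorv a a = replicate (length a) False"
  by (simp add: list_eq_iff_nth_eq)

lemma xorv_zero: "length y = n \<Longrightarrow> xorv y (replicate n False) = y"
  by (simp add: list_eq_iff_nth_eq)

lemma PZ_mult:
  assumes "length a = 27" "length b = 27" "length a' = 27" "length b' = 27"
  shows "mult_op 27 (PZ a b) (PZ a' b') = (\<lambda>y x. sgnc b a' * PZ (xorv a a') (xorv b b') y x)"
proof -
  have "mult_op 27 (PZ a b) (PZ a' b') = kron 27 (\<lambda>j. mult1 (pz (a!j) (b!j)) (pz (a'!j) (b'!j)))"
    unfolding PZ_def by (rule mult_op_kron)
  also have "\<dots> = kron 27 (\<lambda>j u v. (if b!j \<and> a'!j then -1 else 1) * pz (a!j \<noteq> a'!j) (b!j \<noteq> b'!j) u v)"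
    by (simp add: mult1_pz)
  also have "\<dots> = (\<lambda>y x. (\<Prod>j<27. if b!j \<and> a'!j then -1 else 1) * kron 27 (\<lambda>j. pz (a!j \<noteq> a'!j) (b!j \<noteq> b'!j)) y x)"
    by (rule kron_scale)
  also have "kron 27 (\<lambda>j. pz (a!j \<noteq> a'!j) (b!j \<noteq> b'!j)) = PZ (xorv a a') (xorv b b')"
    unfolding PZ_def kron_def using assms by (auto simp: fun_eq_iff intro!: prod.cong)
  finally show ?thesis using prod_sign[of b 27 a'] assms by simp
qed

lemma PZ_entry:
  assumes "length a = 27" "length b = 27"
  shows "PZ a b y x = (if length y = 27 \<and> length x = 27 \<and> y = xorv x a then sgnc b x else 0)"
proof (cases "length y = 27 \<and> length x = 27")
  case True
  show ?thesis
  proof (cases "y = xorv x a")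
    case True2: True
    have "PZ a b y x = (\<Prod>j<27. if b!j \<and> x!j then -1 else 1)"
      unfolding PZ_def kron_def using True True2 assms by (auto simp: pz_def intro!: prod.cong)
    then show ?thesis using True True2 prod_sign[of b 27 x] assms by simp
  next
    case False
    then obtain j where j: "j < 27" "y!j \<noteq> (x!j \<noteq> a!j)" using True assms by (auto simp: list_eq_iff_nth_eq)
    have "(\<Prod>j<27. pz (a!j) (b!j) (y!j) (x!j)) = 0"
      by (rule prod_zero) (use j in \<open>auto simp: pz_def\<close>)
    then show ?thesis using True False unfolding PZ_def kron_def by simp
  qed
next
  case False
  then show ?thesis by (auto simp: PZ_def kron_def)
qed

lemma PZ_apply:
  assumes "length a = 27" "length b = 27" "length y = 27"
  shows "apply_op 27 (PZ a b) \<psi> y = sgnc b (xorv y a) * \<psi> (xorv y a)"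
proof -
  have "apply_op 27 (PZ a b) \<psi> y = (\<Prod>j<27. pz (a!j) (b!j) (y!j) (y!j \<noteq> a!j)) * \<psi> (xorv y a)"
    unfolding PZ_def by (rule mono_apply) (use assms in \<open>auto simp: pz_def\<close>)
  also have "(\<Prod>j<27. pz (a!j) (b!j) (y!j) (y!j \<noteq> a!j)) = (\<Prod>j<27. if b!j \<and> xorv y a!j then -1 else 1)"
    using assms by (intro prod.cong) (auto simp: pz_def)
  also have "\<dots> = sgnc b (xorv y a)" using prod_sign[of b 27 "xorv y a"] assms by simp
  finally show ?thesis .
qed

lemma PZ_zero: "PZ zero27 zero27 = id_op 27"
proof -
  have "pz False False = id1" by (auto simp: fun_eq_iff pz_def id1_def)
  then show ?thesis unfolding PZ_def id_op_def zero27_def kron_def by (auto simp: fun_eq_iff intro!: prod.cong)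
qed

lemma sgnc_zero1[simp]: "sgnc (replicate n False) x = 1" by (simp add: sgnc_def)
lemma sgnc_zero2[simp]: "sgnc x (replicate n False) = 1" by (simp add: sgnc_def)


definition GS :: "qop set" where "GS = {PZ a b | a b. a \<in> S27 \<and> b \<in> Sp}"
definition kap :: complex where "kap = 1 / complex_of_real (sqrt (real (card S27)))"

lemma kap_nz: "kap \<noteq> 0"
proof -
  have "finite S27" by (simp add: S27_eq)
  moreover have "S27 \<noteq> {}" using zero_S by auto
  ultimately have "card S27 > 0" by (simp add: card_gt_0_iff)
  then show ?thesis by (simp add: kap_def)
qed

lemma ket_S_eq: "ket_S = (\<lambda>x. if x \<in> S27 then kap else 0)"
  by (simp add: ket_S_def kap_def fun_eq_iff)

lemma sgnc_perp: "a \<in> S27 \<Longrightarrow> b \<in> Sp \<Longrightarrow> sgnc b a = 1"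
  using perp by (simp add: sgnc_def)

lemma xorv_notS: assumes "y \<notin> S27" "a \<in> S27" "length y = 27" shows "xorv y a \<notin> S27"
proof
  assume "xorv y a \<in> S27"
  then have "xorv (xorv y a) a \<in> S27" using S_xor assms by blast
  then show False using xorv_cancel[of y a] assms lenS by auto
qed

lemma GS_fix: assumes "a \<in> S27" "b \<in> Sp" shows "apply_op 27 (PZ a b) ket_S = ket_S"
proof
  fix y
  have la: "length a = 27" "length b = 27" using assms lenS lenSp by auto
  show "apply_op 27 (PZ a b) ket_S y = ket_S y"
  proof (cases "length y = 27")
    case True
    then have ap: "apply_op 27 (PZ a b) ket_S y = sgnc b (xorv y a) * ket_S (xorv y a)"
      using PZ_apply la by simp
    show ?thesis
    proof (cases "y \<in> S27")
      case True
      then have "xorv y a \<in> S27" using S_xor assms by blast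
      then show ?thesis using ap sgnc_perp[OF _ assms(2)] True by (simp add: ket_S_eq)
    next
      case False
      then show ?thesis using ap xorv_notS[OF False assms(1) True] by (simp add: ket_S_eq)
    qed
  next
    case False
    then show ?thesis using lenS by (auto simp: apply_op_def ket_S_eq)
  qed
qed

lemma PZ_inj:
  assumes "length a = 27" "length b = 27" "length a' = 27" "length b' = 27" "PZ a b = PZ a' b'"
  shows "a = a' \<and> b = b'"
proof
  have "PZ a b a zero27 = 1" using assms PZ_entry[of a b a zero27] xorv_zero[of a 27]
    by (simp add: zero27_def xorv_comm)
  then have "PZ a' b' a zero27 \<noteq> 0" using assms by simp
  then show aa: "a = a'" using assms PZ_entry[of a' b' a zero27] xorv_zero[of a' 27]
    by (simp add: zero27_def xorv_comm split: if_splits)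
  show "b = b'"
  proof (rule nth_equalityI)
    fix k assume "k < length b"
    then have k: "k < 27" using assms by simp
    let ?e = "(replicate 27 False)[k:=True]"
    have le: "length ?e = 27" by simp
    have "PZ a b (xorv ?e a) ?e = sgnc b ?e" "PZ a' b' (xorv ?e a) ?e = sgnc b' ?e"
      using assms aa PZ_entry[of a b "xorv ?e a" ?e] PZ_entry[of a' b' "xorv ?e a" ?e] by auto
    then have "sgnc b ?e = sgnc b' ?e" using assms by simp
    then have "par b ?e = par b' ?e" by (auto simp: sgnc_def split: if_splits)
    then show "b!k = b'!k" using par_unit[of b 27 k] par_unit[of b' 27 k] assms k by simp
  qed (use assms in simp)
qed

lemma card_GS: "card GS = 2 ^ 27"
proof -
  let ?f = "\<lambda>(cs, ds). PZ (lc 27 cs xi) (lc 27 ds beta)"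
  have GS_img: "GS = ?f ` (bitstrings 6 \<times> bitstrings 21)"
    unfolding GS_def S27_lc Sp_def bitstrings_def by auto
  have "inj_on ?f (bitstrings 6 \<times> bitstrings 21)"
  proof (rule inj_onI)
    fix p q
    assume mp: "p \<in> bitstrings 6 \<times> bitstrings 21" "q \<in> bitstrings 6 \<times> bitstrings 21" and epq: "?f p = ?f q"
    obtain cs ds cs' ds' where pq: "p = (cs, ds)" "q = (cs', ds')" by (cases p, cases q) auto
    have m: "(cs, ds) \<in> bitstrings 6 \<times> bitstrings 21" "(cs', ds') \<in> bitstrings 6 \<times> bitstrings 21"
      using mp pq by auto
    have e: "PZ (lc 27 cs xi) (lc 27 ds beta) = PZ (lc 27 cs' xi) (lc 27 ds' beta)" using epq pq by simp
    have l: "length cs = 6" "length cs' = 6" "length ds = 21" "length ds' = 21" using m by (auto simp: bitstrings_def)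
    have "lc 27 cs xi = lc 27 cs' xi \<and> lc 27 ds beta = lc 27 ds' beta"
      using PZ_inj[OF _ _ _ _ e] len_xi len_beta by (simp add: length_lc)
    then show "p = q" using S_inj Sp_inj l pq by blast
  qed
  then have "card GS = card (bitstrings 6 \<times> bitstrings 21)" using GS_img card_image by metis
  also have "\<dots> = 2 ^ 27" by (simp add: card_cartesian_product card_bitstrings)
  finally show ?thesis .
qed

lemma GS_mult: assumes "a \<in> S27" "b \<in> Sp" "a' \<in> S27" "b' \<in> Sp"
  shows "mult_op 27 (PZ a b) (PZ a' b') = PZ (xorv a a') (xorv b b')"
  using PZ_mult[of a b a' b'] assms lenS lenSp sgnc_perp by simp

lemma id_op_zero: "id_op 27 zero27 zero27 = 1"
  by (simp add: id_op_def kron_def zero27_def id1_def)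

lemma GS_uniq:
  assumes st: "is_state 27 \<phi>" and fx: "\<forall>A\<in>GS. apply_op 27 A \<phi> = \<phi>"
  shows "\<exists>c. \<phi> = (\<lambda>x. c * ket_S x)"
proof
  let ?c = "\<phi> zero27 / kap"
  show "\<phi> = (\<lambda>x. ?c * ket_S x)"
  proof
    fix y
    show "\<phi> y = ?c * ket_S y"
    proof (cases "length y = 27")
      case False
      then show ?thesis using st lenS by (auto simp: is_state_def ket_S_eq)
    next
      case ly: True
      show ?thesis
      proof (cases "y \<in> S27")
        case True
        have "PZ y zero27 \<in> GS" using True zero_Sp by (auto simp: GS_def zero27_def)
        then have "apply_op 27 (PZ y zero27) \<phi> y = \<phi> y" using fx by simp
        moreover have "apply_op 27 (PZ y zero27) \<phi> y = \<phi> zero27"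
          using PZ_apply[of y zero27 y \<phi>] ly xorv_self[of y] by (simp add: zero27_def)
        ultimately show ?thesis using True kap_nz by (simp add: ket_S_eq)
      next
        case False
        then obtain k where k: "k < 21" "par (beta!k) y" using perpperp[OF ly] by blast
        have "PZ zero27 (beta!k) \<in> GS" using zero_S beta_in_Sp[OF k(1)] by (auto simp: GS_def zero27_def)
        then have "apply_op 27 (PZ zero27 (beta!k)) \<phi> y = \<phi> y" using fx by simp
        moreover have "apply_op 27 (PZ zero27 (beta!k)) \<phi> y = - \<phi> y"
          using PZ_apply[of zero27 "beta!k" y \<phi>] ly k len_beta xorv_zero[of y 27]
          by (simp add: zero27_def sgnc_def)
        ultimately have "\<phi> y = 0" by simp
        then show ?thesis using False by (simp add: ket_S_eq)
      qed
    qed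
  qed
qed

lemma stab_S: "stabilizer_state 27 ket_S"
  unfolding stabilizer_state_def
proof (intro conjI exI[of _ GS])
  show "is_state 27 ket_S" using lenS by (auto simp: is_state_def ket_S_eq)
  show "ket_S \<noteq> (\<lambda>_. 0)" using zero_S kap_nz by (auto simp: ket_S_eq fun_eq_iff zero27_def)
  show "GS \<subseteq> pauli_group 27" using pz_in by (auto simp: GS_def PZ_def pauli_group_def)
  have "PZ zero27 zero27 \<in> GS" using zero_S zero_Sp unfolding GS_def zero27_def by blast
  then show "id_op 27 \<in> GS" using PZ_zero by simp
  show "\<forall>A\<in>GS. \<forall>B\<in>GS. mult_op 27 A B \<in> GS"
    using GS_mult S_xor Sp_xor unfolding GS_def by fast
  show "\<forall>A\<in>GS. \<exists>B\<in>GS. mult_op 27 A B = id_op 27"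
  proof
    fix A assume "A \<in> GS"
    then obtain a b where ab: "A = PZ a b" "a \<in> S27" "b \<in> Sp" by (auto simp: GS_def)
    have "mult_op 27 A A = PZ zero27 zero27"
      using GS_mult[OF ab(2,3,2,3)] ab xorv_self[of a] xorv_self[of b] lenS lenSp by (simp add: zero27_def)
    then show "\<exists>B\<in>GS. mult_op 27 A B = id_op 27" using \<open>A \<in> GS\<close> PZ_zero by auto
  qed
  show "\<forall>A\<in>GS. \<forall>B\<in>GS. mult_op 27 A B = mult_op 27 B A"
    using GS_mult by (auto simp: GS_def xorv_comm)
  show "card GS = 2 ^ 27" by (rule card_GS)
  show "(\<lambda>y x. - id_op 27 y x) \<notin> GS"
  proof
    assume "(\<lambda>y x. - id_op 27 y x) \<in> GS"
    then obtain a b where ab: "(\<lambda>y x. - id_op 27 y x) = PZ a b" "a \<in> S27" "b \<in> Sp" by (auto simp: GS_def)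
    then have "PZ a b zero27 zero27 = -1" using id_op_zero by (metis)
    moreover have "PZ a b zero27 zero27 = 0 \<or> PZ a b zero27 zero27 = 1"
      using PZ_entry[of a b zero27 zero27] ab lenS lenSp by (simp add: zero27_def)
    ultimately show False by auto
  qed
  show "\<forall>A\<in>GS. apply_op 27 A ket_S = ket_S" using GS_fix by (auto simp: GS_def)
  show "\<forall>\<phi>. is_state 27 \<phi> \<and> (\<forall>A\<in>GS. apply_op 27 A \<phi> = \<phi>) \<longrightarrow> (\<exists>c. \<phi> = (\<lambda>x. c * ket_S x))"
    using GS_uniq by blast
qed


definition Bv :: "bool list \<Rightarrow> bool list" where "Bv a = [((a!1 \<noteq> a!2) \<noteq> a!7), (((a!0 \<noteq> a!3) \<noteq> a!7) \<noteq> a!15), (((a!0 \<noteq> a!3) \<noteq> a!7) \<noteq> a!15), ((a!1 \<noteq> a!2) \<noteq> a!7), False, False, False, ((((a!0 \<noteq> a!1) \<noteq> a!2) \<noteq> a!3) \<noteq> a!15), False, False, False, False, False, False, False, ((a!1 \<noteq> a!2) \<noteq> a!7), False, False, False, False, False, False, False, False, False, False, False]"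

lemma odd_filter: "odd (length (filter id xs)) = foldr (\<noteq>) xs False"
  by (induction xs) auto

lemma len27: "length x = 27 \<Longrightarrow> \<exists>x0 x1 x2 x3 x4 x5 x6 x7 x8 x9 x10 x11 x12 x13 x14 x15 x16 x17 x18 x19 x20 x21 x22 x23 x24 x25 x26.
  x = [x0, x1, x2, x3, x4, x5, x6, x7, x8, x9, x10, x11, x12, x13, x14, x15, x16, x17, x18, x19, x20, x21, x22, x23, x24, x25, x26]"
  by (auto simp: length_Suc_conv numeral_eq_Suc)

lemma Q_ident: assumes "length x = 27" "length a = 27"
  shows "Q27 (xorv x a) = ((Q27 x \<noteq> Q27 a) \<noteq> par (Bv a) x)"
proof -
  obtain x0 x1 x2 x3 x4 x5 x6 x7 x8 x9 x10 x11 x12 x13 x14 x15 x16 x17 x18 x19 x20 x21 x22 x23 x24 x25 x26 where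
    x: "x = [x0, x1, x2, x3, x4, x5, x6, x7, x8, x9, x10, x11, x12, x13, x14, x15, x16, x17, x18, x19, x20, x21, x22, x23, x24, x25, x26]"
    using len27[OF assms(1)] by (elim exE) auto
  obtain a0 a1 a2 a3 a4 a5 a6 a7 a8 a9 a10 a11 a12 a13 a14 a15 a16 a17 a18 a19 a20 a21 a22 a23 a24 a25 a26 where
    a: "a = [a0, a1, a2, a3, a4, a5, a6, a7, a8, a9, a10, a11, a12, a13, a14, a15, a16, a17, a18, a19, a20, a21, a22, a23, a24, a25, a26]"
    using len27[OF assms(2)] by (elim exE) auto
  show ?thesis
    unfolding x a Q27_def par_def odd_filter Bv_def xorv_def
    by simp argo
qed

definition qs :: "bool list \<Rightarrow> complex" where "qs y = (if Q27 y then -1 else 1)"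
definition Dop :: qop where "Dop = (\<lambda>y x. if y = x \<and> length y = 27 then qs y else 0)"
definition cj :: "qop \<Rightarrow> qop" where "cj g = mult_op 27 Dop (mult_op 27 g Dop)"

lemma qs_sq[simp]: "qs y * qs y = 1" by (simp add: qs_def)

lemma mult_Dop_right: "mult_op 27 g Dop y x = (if length x = 27 then g y x * qs x else 0)"
proof -
  have "mult_op 27 g Dop y x = (\<Sum>z\<in>bitstrings 27. if z = x then (if length x = 27 then g y x * qs x else 0) else 0)"
    unfolding mult_op_def Dop_def by (intro sum.cong) auto
  also have "\<dots> = (if length x = 27 then g y x * qs x else 0)"
  proof -
    have "x \<in> bitstrings 27 \<longleftrightarrow> length x = 27" by (simp add: bitstrings_def)
    then show ?thesis by (simp add: sum.delta[OF finite_bitstrings])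
  qed
  finally show ?thesis .
qed

lemma mult_Dop_left: "mult_op 27 Dop h y x = (if length y = 27 then qs y * h y x else 0)"
proof -
  have "mult_op 27 Dop h y x = (\<Sum>z\<in>bitstrings 27. if z = y then (if length y = 27 then qs y * h y x else 0) else 0)"
    unfolding mult_op_def Dop_def by (intro sum.cong) auto
  also have "\<dots> = (if length y = 27 then qs y * h y x else 0)"
  proof -
    have "y \<in> bitstrings 27 \<longleftrightarrow> length y = 27" by (simp add: bitstrings_def)
    then show ?thesis by (simp add: sum.delta[OF finite_bitstrings])
  qed
  finally show ?thesis .
qed

lemma cj_entry: "cj g y x = (if length y = 27 \<and> length x = 27 then qs y * g y x * qs x else 0)"
  by (simp add: cj_def mult_Dop_left mult_Dop_right mult.assoc)

definition vanish :: "qop \<Rightarrow> bool" where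
  "vanish g \<longleftrightarrow> (\<forall>y x. length y \<noteq> 27 \<or> length x \<noteq> 27 \<longrightarrow> g y x = 0)"

lemma vanish_PZ: "vanish (PZ a b)" by (auto simp: vanish_def PZ_def kron_def)

lemma cj_cj: "vanish g \<Longrightarrow> cj (cj g) = g"
  by (auto simp: fun_eq_iff cj_entry vanish_def)

lemma cj_mult: "mult_op 27 (cj g) (cj h) = cj (mult_op 27 g h)"
proof (intro ext)
  fix y z
  show "mult_op 27 (cj g) (cj h) y z = cj (mult_op 27 g h) y z"
  proof (cases "length y = 27 \<and> length z = 27")
    case True
    have "mult_op 27 (cj g) (cj h) y z = (\<Sum>x\<in>bitstrings 27. qs y * (g y x * h x z) * qs z)"
      unfolding mult_op_def using True
      by (intro sum.cong) (auto simp: cj_entry bitstrings_def algebra_simps)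
    also have "\<dots> = cj (mult_op 27 g h) y z"
      using True by (simp add: cj_entry mult_op_def sum_distrib_left sum_distrib_right)
    finally show ?thesis .
  next
    case False
    then show ?thesis by (auto simp: mult_op_def cj_entry)
  qed
qed

lemma id_entry: "id_op 27 y x = (if length y = 27 \<and> length x = 27 \<and> y = x then 1 else 0)"
  using PZ_entry[of zero27 zero27 y x] PZ_zero xorv_zero[of x 27] by (auto simp: zero27_def)

lemma cj_id: "cj (id_op 27) = id_op 27"
  by (auto simp: fun_eq_iff cj_entry id_entry)

lemma cj_neg: "cj (\<lambda>y x. - g y x) = (\<lambda>y x. - cj g y x)"
  by (auto simp: fun_eq_iff cj_entry)

lemma cj_apply: "apply_op 27 (cj g) \<phi> y = qs y * apply_op 27 g (\<lambda>x. qs x * \<phi> x) y"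
  by (auto simp: apply_op_def cj_entry bitstrings_def sum_distrib_left algebra_simps intro!: sum.cong)

lemma ket_QS_eq: "ket_QS = (\<lambda>x. qs x * ket_S x)"
  by (auto simp: fun_eq_iff ket_QS_def ket_S_eq kap_def qs_def)

lemma minus_id1_in: "(\<lambda>u v. - id1 u v) \<in> pauli_group1"
proof -
  have "mult1 (mult1 pauliZ pauliX) (mult1 pauliZ pauliX) = (\<lambda>u v. - id1 u v)"
    by (auto simp: fun_eq_iff mult1_def pauliX_def pauliZ_def id1_def UNIV_bool)
  then show ?thesis by (metis pauli_group1.intros)
qed

lemma qs_pz_in: "(\<lambda>u v. qs a * pz c d u v) \<in> pauli_group1"
proof (cases "Q27 a")
  case True
  have "mult1 (\<lambda>u v. - id1 u v) (pz c d) = (\<lambda>u v. qs a * pz c d u v)"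
    using True by (auto simp: fun_eq_iff mult1_def id1_def qs_def UNIV_bool)
  moreover have "mult1 (\<lambda>u v. - id1 u v) (pz c d) \<in> pauli_group1" by (rule pauli_group1.mult[OF minus_id1_in pz_in])
  ultimately show ?thesis by simp
next
  case False
  then show ?thesis using pz_in[of c d] by (simp add: qs_def)
qed

lemma cj_PZ:
  assumes la: "length a = 27" and lb: "length b = 27"
  shows "cj (PZ a b) = kron 27 (\<lambda>j u v. (if j = 0 then qs a else 1) * pz (a!j) (xorv b (Bv a) ! j) u v)"
proof -
  have lB: "length (Bv a) = 27" by (simp add: Bv_def)
  have pr: "(\<Prod>j<(27::nat). if j = 0 then qs a else 1) = qs a" by (simp add: prod.delta')
  have r: "kron 27 (\<lambda>j u v. (if j = 0 then qs a else 1) * pz (a!j) (xorv b (Bv a) ! j) u v)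
        = (\<lambda>y x. qs a * PZ a (xorv b (Bv a)) y x)"
    unfolding kron_scale pr PZ_def ..
  show ?thesis unfolding r
  proof (intro ext)
    fix y x
    show "cj (PZ a b) y x = qs a * PZ a (xorv b (Bv a)) y x"
    proof (cases "length y = 27 \<and> length x = 27 \<and> y = xorv x a")
      case True
      have "sgnc (xorv b (Bv a)) x = sgnc b x * sgnc (Bv a) x"
        using par_xor1[of b "Bv a" x] lb lB by (simp add: sgnc_def)
      moreover have "Q27 (xorv x a) = ((Q27 x \<noteq> Q27 a) \<noteq> par (Bv a) x)"
        using Q_ident True la by simp
      ultimately show ?thesis using True la lb lB
        by (simp add: cj_entry PZ_entry qs_def sgnc_def)
    next
      case False
      then show ?thesis using la lb lB PZ_entry[of a "xorv b (Bv a)" y x] PZ_entry[of a b y x]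
        by (auto simp: cj_entry)
    qed
  qed
qed

lemma cj_PZ_in: "length a = 27 \<Longrightarrow> length b = 27 \<Longrightarrow> cj (PZ a b) \<in> pauli_group 27"
  unfolding cj_PZ pauli_group_def
  using qs_pz_in pz_in by (auto intro!: exI)


definition GQ :: "qop set" where "GQ = cj ` GS"

lemma GS_vanish: "g \<in> GS \<Longrightarrow> vanish g" using vanish_PZ by (auto simp: GS_def)

lemma neg_notin_GS: "(\<lambda>y x. - id_op 27 y x) \<notin> GS"
proof
  assume "(\<lambda>y x. - id_op 27 y x) \<in> GS"
  then obtain a b where ab: "(\<lambda>y x. - id_op 27 y x) = PZ a b" "a \<in> S27" "b \<in> Sp" by (auto simp: GS_def)
  then have "PZ a b zero27 zero27 = -1" using id_op_zero by (metis)
  moreover have "PZ a b zero27 zero27 = 0 \<or> PZ a b zero27 zero27 = 1"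
    using PZ_entry[of a b zero27 zero27] ab lenS lenSp by (simp add: zero27_def)
  ultimately show False by auto
qed

lemma GS_closed: "A \<in> GS \<Longrightarrow> B \<in> GS \<Longrightarrow> mult_op 27 A B \<in> GS"
  using GS_mult S_xor Sp_xor unfolding GS_def by fast

lemma GS_id: "id_op 27 \<in> GS"
proof -
  have "PZ zero27 zero27 \<in> GS" using zero_S zero_Sp unfolding GS_def zero27_def by blast
  then show "id_op 27 \<in> GS" using PZ_zero by simp
qed

lemma GS_sq: "A \<in> GS \<Longrightarrow> mult_op 27 A A = id_op 27"
proof -
  assume "A \<in> GS"
  then obtain a b where ab: "A = PZ a b" "a \<in> S27" "b \<in> Sp" by (auto simp: GS_def)
  have "mult_op 27 A A = PZ zero27 zero27"
    using GS_mult[OF ab(2,3,2,3)] ab xorv_self[of a] xorv_self[of b] lenS lenSp by (simp add: zero27_def)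
  then show ?thesis using PZ_zero by simp
qed

lemma GS_comm: "A \<in> GS \<Longrightarrow> B \<in> GS \<Longrightarrow> mult_op 27 A B = mult_op 27 B A"
  using GS_mult by (auto simp: GS_def xorv_comm)

lemma stab_QS: "stabilizer_state 27 ket_QS"
  unfolding stabilizer_state_def
proof (intro conjI exI[of _ GQ])
  show "is_state 27 ket_QS" using lenS by (auto simp: is_state_def ket_QS_eq ket_S_eq)
  show "ket_QS \<noteq> (\<lambda>_. 0)" using zero_S kap_nz by (auto simp: ket_QS_eq ket_S_eq fun_eq_iff qs_def zero27_def)
  show "GQ \<subseteq> pauli_group 27" using cj_PZ_in lenS lenSp by (auto simp: GQ_def GS_def)
  show "id_op 27 \<in> GQ" using GS_id cj_id unfolding GQ_def by (metis image_eqI)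
  show "\<forall>A\<in>GQ. \<forall>B\<in>GQ. mult_op 27 A B \<in> GQ"
    using GS_closed cj_mult unfolding GQ_def by auto
  show "\<forall>A\<in>GQ. \<exists>B\<in>GQ. mult_op 27 A B = id_op 27"
    using GS_sq cj_mult cj_id unfolding GQ_def by (metis image_iff)
  show "\<forall>A\<in>GQ. \<forall>B\<in>GQ. mult_op 27 A B = mult_op 27 B A"
    using GS_comm cj_mult unfolding GQ_def by auto
  have "inj_on cj GS" by (rule inj_on_inverseI[where g=cj]) (use GS_vanish cj_cj in auto)
  then show "card GQ = 2 ^ 27" unfolding GQ_def using card_image card_GS by metis
  show "(\<lambda>y x. - id_op 27 y x) \<notin> GQ"
  proof
    assume "(\<lambda>y x. - id_op 27 y x) \<in> GQ"
    then obtain g where g: "g \<in> GS" "cj g = (\<lambda>y x. - id_op 27 y x)" by (auto simp: GQ_def)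
    then have "g = cj (\<lambda>y x. - id_op 27 y x)" using cj_cj GS_vanish by metis
    also have "\<dots> = (\<lambda>y x. - id_op 27 y x)" by (simp add: cj_neg cj_id)
    finally show False using g(1) neg_notin_GS by simp
  qed
  have fixS: "\<forall>A\<in>GS. apply_op 27 A ket_S = ket_S" using GS_fix by (auto simp: GS_def)
  show "\<forall>A\<in>GQ. apply_op 27 A ket_QS = ket_QS"
  proof
    fix A assume "A \<in> GQ"
    then obtain g where g: "g \<in> GS" "A = cj g" by (auto simp: GQ_def)
    have e: "(\<lambda>x. qs x * ket_QS x) = ket_S" by (simp add: ket_QS_eq mult.assoc[symmetric])
    have "apply_op 27 (cj g) ket_QS y = ket_QS y" for y
      using g(1) fixS by (simp add: cj_apply e) (simp add: ket_QS_eq)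
    then show "apply_op 27 A ket_QS = ket_QS" using g(2) by auto
  qed
  show "\<forall>\<phi>. is_state 27 \<phi> \<and> (\<forall>A\<in>GQ. apply_op 27 A \<phi> = \<phi>) \<longrightarrow> (\<exists>c. \<phi> = (\<lambda>x. c * ket_QS x))"
  proof (intro allI impI)
    fix \<phi> assume a: "is_state 27 \<phi> \<and> (\<forall>A\<in>GQ. apply_op 27 A \<phi> = \<phi>)"
    let ?p = "\<lambda>x. qs x * \<phi> x"
    have "is_state 27 ?p" using a by (simp add: is_state_def)
    moreover have "\<forall>A\<in>GS. apply_op 27 A ?p = ?p"
    proof
      fix g assume "g \<in> GS"
      then have "apply_op 27 (cj g) \<phi> = \<phi>" using a by (auto simp: GQ_def)
      then have "\<And>y. qs y * apply_op 27 g ?p y = \<phi> y" by (metis cj_apply)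
      then have "\<And>y. apply_op 27 g ?p y = qs y * \<phi> y"
        by (metis (no_types, lifting) mult.assoc mult_1 qs_sq)
      then show "apply_op 27 g ?p = ?p" by auto
    qed
    ultimately obtain c where "?p = (\<lambda>x. c * ket_S x)" using GS_uniq by blast
    then have "\<And>x. \<phi> x = c * ket_QS x"
      by (metis (no_types, lifting) ket_QS_eq mult.assoc mult.left_commute mult_1 qs_sq)
    then show "\<exists>c. \<phi> = (\<lambda>x. c * ket_QS x)" by auto
  qed
qed


definition cv :: "nat list" where "cv = [1, 5, 5, 5, 5, 5, 5, 1, 1, 1, 1, 1, 1, 1, 7, 7, 5, 7, 3, 7, 7, 3, 7, 1, 1, 7, 1]"

definition dg :: "complex \<Rightarrow> qop1" where
  "dg w = (\<lambda>u v. if u = v then (if u then w else 1) else 0)"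

lemma cv_check: "\<forall>y\<in>set Slist. (\<Sum>j<27. if y!j then cv!j else 0) mod 8 = (if Q27 y then 4 else 0)"
  by code_simp

lemma unitary_dg: "unitary1 (dg (cis t))"
proof -
  have "cis t * cnj (cis t) = 1" "cnj (cis t) * cis t = 1"
    by (simp_all add: cis_cnj cis_mult)
  then show ?thesis
    by (auto simp: unitary1_def mult1_def adj1_def dg_def id1_def fun_eq_iff UNIV_bool)
qed

lemma prod_cis: "(\<Prod>j\<in>A. cis (f j)) = cis (\<Sum>j\<in>A. f j)"
  by (induction A rule: infinite_finite_induct) (simp_all add: cis_mult)

lemma cis_mod8: "cis (pi / 4 * real m) = cis (pi / 4 * real (m mod 8))"
proof -
  have "real m = real (m mod 8) + 8 * real (m div 8)"
    by (metis mod_div_mult_eq of_nat_add of_nat_mult of_nat_numeral mult.commute)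
  then have e: "pi / 4 * real m = pi / 4 * real (m mod 8) + 2 * pi * real (m div 8)" by (simp add: algebra_simps)
  have "cis (2 * pi * real (m div 8)) = 1" by (rule cis_multiple_2pi) (simp add: Ints_of_nat)
  then show ?thesis unfolding e cis_mult[symmetric] by simp
qed

lemma LU: "LU_equiv 27 ket_S ket_QS"
  unfolding LU_equiv_def
proof (intro exI conjI allI impI)
  let ?U = "\<lambda>j. dg (cis (pi / 4 * real (cv!j)))"
  show "unitary1 (?U j)" for j by (rule unitary_dg)
  show "apply_op 27 (kron 27 ?U) ket_S = ket_QS"
  proof
    fix y
    show "apply_op 27 (kron 27 ?U) ket_S y = ket_QS y"
    proof (cases "length y = 27")
      case False
      then show ?thesis using lenS by (auto simp: apply_op_def ket_QS_eq ket_S_eq)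
    next
      case True
      have "apply_op 27 (kron 27 ?U) ket_S y = (\<Prod>j<27. ?U j (y!j) (y!j \<noteq> zero27!j)) * ket_S (xorv y zero27)"
        by (rule mono_apply) (use True in \<open>auto simp: dg_def zero27_def\<close>)
      also have "(\<Prod>j<27. ?U j (y!j) (y!j \<noteq> zero27!j)) = (\<Prod>j<27. cis (if y!j then pi / 4 * real (cv!j) else 0))"
        by (intro prod.cong) (auto simp: dg_def zero27_def)
      also have "\<dots> = cis (\<Sum>j<27. if y!j then pi / 4 * real (cv!j) else 0)" by (rule prod_cis)
      also have "(\<Sum>j<27. if y!j then pi / 4 * real (cv!j) else 0) = pi / 4 * real (\<Sum>j<27. if y!j then cv!j else 0)"
        unfolding of_nat_sum sum_distrib_left by (intro sum.cong) auto
      also have "xorv y zero27 = y" using True xorv_zero[of y 27] by (simp add: zero27_def)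
      finally have ap0: "apply_op 27 (kron 27 ?U) ket_S y = cis (pi / 4 * real (\<Sum>j<27. if y!j then cv!j else 0)) * ket_S y" .
      have ap: "apply_op 27 (kron 27 ?U) ket_S y = cis (pi / 4 * real ((\<Sum>j<27. if y!j then cv!j else 0) mod 8)) * ket_S y"
        by (metis ap0 cis_mod8)
      show ?thesis
      proof (cases "y \<in> S27")
        case True
        then have "(\<Sum>j<27. if y!j then cv!j else 0) mod 8 = (if Q27 y then 4 else 0)" using cv_check S27_eq by auto
        then show ?thesis using ap True by (simp add: ket_QS_eq qs_def)
      next
        case False
        then show ?thesis using ap by (simp add: ket_QS_eq ket_S_eq)
      qed
    qed
  qed
qed


definition cl :: "qop1 \<Rightarrow> qop1 \<Rightarrow> qop1" where "cl U P = mult1 U (mult1 P (adj1 U))"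

lemma mult1_assoc: "mult1 (mult1 A B) C = mult1 A (mult1 B C)"
  by (simp add: fun_eq_iff mult1_def UNIV_bool distrib_left distrib_right mult.assoc add_ac)

lemma mult1_id_right[simp]: "mult1 A id1 = A"
  by (simp add: fun_eq_iff mult1_def UNIV_bool id1_def)

lemma mult1_id_left[simp]: "mult1 id1 A = A"
  by (simp add: fun_eq_iff mult1_def UNIV_bool id1_def)

lemma cl_mult: "unitary1 U \<Longrightarrow> mult1 (cl U P) U = mult1 U P"
proof -
  assume "unitary1 U"
  then have u: "mult1 (adj1 U) U = id1" by (simp add: unitary1_def)
  have "mult1 (cl U P) U = mult1 U (mult1 P (mult1 (adj1 U) U))" unfolding cl_def mult1_assoc ..
  then show ?thesis using u by simp
qed

lemma cl_id: "unitary1 U \<Longrightarrow> cl U id1 = id1"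
  unfolding cl_def unitary1_def by simp

lemma cl_in: "clifford1 U \<Longrightarrow> P \<in> pauli_group1 \<Longrightarrow> cl U P \<in> PG16"
proof -
  assume a: "clifford1 U" "P \<in> pauli_group1"
  then have "cl U P \<in> pauli_group1" unfolding clifford1_def cl_def by (metis imageI)
  then show ?thesis using pauli_group1_sub by blast
qed

lemma unit_cols:
  assumes "unitary1 U"
  shows "cnj (U False False) * U False False + cnj (U True False) * U True False = 1"
    "cnj (U False True) * U False True + cnj (U True True) * U True True = 1"
proof -
  have "mult1 (adj1 U) U False False = id1 False False" "mult1 (adj1 U) U True True = id1 True True"
    using assms by (simp_all add: unitary1_def)
  then show "cnj (U False False) * U False False + cnj (U True False) * U True False = 1"
    "cnj (U False True) * U False True + cnj (U True True) * U True True = 1"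
    by (simp_all add: mult1_def adj1_def UNIV_bool id1_def add.commute)
qed


lemma i_fix: "\<i> * z = z \<Longrightarrow> z = (0::complex)" "- (\<i> * z) = z \<Longrightarrow> z = (0::complex)"
  by (metis add.inverse_neutral complex_i_not_one mult_cancel_right2 mult.commute,
      metis add_eq_0_iff complex_i_not_zero equation_minus_iff i_squared minus_mult_left mult.assoc mult_cancel_right2 mult_minus1 one_neq_neg_one)

lemma Z_type:
  assumes cU: "clifford1 U" and z: "cl U pauliZ True False = 0"
  shows "(U False True = 0 \<and> U True False = 0) \<or> (U False False = 0 \<and> U True True = 0)"
proof -
  have uU: "unitary1 U" using cU by (simp add: clifford1_def)
  have M: "cl U pauliZ \<in> PG16" using cl_in[OF cU pauli_group1.genZ] .
  obtain c where c: "c \<in> U4" "cl U pauliZ = (\<lambda>a b. c * id1 a b) \<or> cl U pauliZ = (\<lambda>a b. c * pauliZ a b)"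
    using PG16_diag[OF M z] by blast
  have eq: "mult1 (cl U pauliZ) U = mult1 U pauliZ" by (rule cl_mult[OF uU])
  have col: "cnj (U False False) * U False False + cnj (U True False) * U True False = 1"
    "cnj (U False True) * U False True + cnj (U True True) * U True True = 1" using unit_cols[OF uU] by auto
  have cc: "c = 1 \<or> c = -1 \<or> c = \<i> \<or> c = - \<i>" using c(1) by (simp add: U4_def)
  from c(2) show ?thesis
  proof
    assume h: "cl U pauliZ = (\<lambda>a b. c * id1 a b)"
    have e: "c * U a b = U a b * (if b then -1 else 1)" for a b
    proof -
      have "mult1 (cl U pauliZ) U a b = mult1 U pauliZ a b" using eq by simp
      then show ?thesis
        unfolding h by (cases a; cases b) (simp_all add: mult1_def UNIV_bool id1_def pauliZ_def)
    qed
    have False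
      using cc
    proof (elim disjE)
      assume "c = 1" then show False using e[of False True] e[of True True] col(2) by simp
    next
      assume "c = -1" then show False using e[of False False] e[of True False] col(1) i_fix by simp
    next
      assume "c = \<i>" then show False using e[of False False] e[of True False] col(1) i_fix(1)[of "U False False"] i_fix(1)[of "U True False"] by simp
    next
      assume "c = - \<i>" then show False using e[of False False] e[of True False] col(1) i_fix(2)[of "U False False"] i_fix(2)[of "U True False"] by simp
    qed
    then show ?thesis ..
  next
    assume h: "cl U pauliZ = (\<lambda>a b. c * pauliZ a b)"
    have e: "c * (if a then -1 else 1) * U a b = U a b * (if b then -1 else 1)" for a b
    proof -
      have "mult1 (cl U pauliZ) U a b = mult1 U pauliZ a b" using eq by simp
      then show ?thesis
        unfolding h by (cases a; cases b) (simp_all add: mult1_def UNIV_bool pauliZ_def)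
    qed
    show ?thesis
      using cc
    proof (elim disjE)
      assume "c = 1" then show ?thesis using e[of False True] e[of True False] by simp
    next
      assume "c = -1" then show ?thesis using e[of False False] e[of True True] by simp
    next
      assume "c = \<i>" then show ?thesis using e[of False False] e[of True False] col(1) i_fix[of "U False False"] i_fix[of "U True False"] by simp
    next
      assume "c = - \<i>" then show ?thesis using e[of False False] e[of True False] col(1) i_fix[of "U False False"] i_fix[of "U True False"] by simp
    qed
  qed
qed

lemma X_phase:
  assumes cU: "clifford1 U"
    and dz: "(U False True = 0 \<and> U True False = 0) \<or> (U False False = 0 \<and> U True True = 0)"
  defines "e \<equiv> (U False False = 0)"
  shows "\<And>u v. u \<noteq> (v \<noteq> e) \<Longrightarrow> U u v = 0"
    and "U False e \<noteq> 0" and "U True (\<not> e) \<noteq> 0"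
    and "(U True (\<not> e)) ^ 4 = (U False e) ^ 4"
proof -
  have uU: "unitary1 U" using cU by (simp add: clifford1_def)
  have col: "cnj (U False False) * U False False + cnj (U True False) * U True False = 1"
    "cnj (U False True) * U False True + cnj (U True True) * U True True = 1" using unit_cols[OF uU] by auto
  show sup: "U u v = 0" if "u \<noteq> (v \<noteq> e)" for u v
    using dz col that unfolding e_def by (cases u; cases v) auto
  show nzF: "U False e \<noteq> 0" using dz col unfolding e_def by (cases "U False False = 0") auto
  show nzT: "U True (\<not> e) \<noteq> 0" using dz col unfolding e_def by (cases "U False False = 0") auto
  have M: "cl U pauliX \<in> PG16" using cl_in[OF cU pauli_group1.genX] .
  have eq: "mult1 (cl U pauliX) U = mult1 U pauliX" by (rule cl_mult[OF uU])
  have key: "cl U pauliX False True * U True (\<not> e) = U False e"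
  proof (cases e)
    case True
    then have "U False False = 0" "U True True = 0" using dz col unfolding e_def by auto
    moreover have "mult1 (cl U pauliX) U False False = mult1 U pauliX False False" using eq by simp
    ultimately show ?thesis using True by (simp add: mult1_def UNIV_bool pauliX_def)
  next
    case False
    then have "U False True = 0" "U True False = 0" using dz col unfolding e_def by auto
    moreover have "mult1 (cl U pauliX) U False True = mult1 U pauliX False True" using eq by simp
    ultimately show ?thesis using False by (simp add: mult1_def UNIV_bool pauliX_def)
  qed
  have "cl U pauliX False True = 0 \<or> (cl U pauliX False True) ^ 4 = 1" by (rule PG16_pow4[OF M])
  then have "(cl U pauliX False True) ^ 4 = 1" using key nzF by auto
  then show "(U True (\<not> e)) ^ 4 = (U False e) ^ 4"
    using key by (metis mult_1 power_mult_distrib)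
qed


definition cert :: "(bool list \<times> nat) list" where
  "cert = [(bits ''000000000000000111111111111'', 1),
    (bits ''000111100000011001100001111'', 3),
    (bits ''000111111111100001111110000'', 1),
    (bits ''001000101100110101001001011'', 1),
    (bits ''001000110011001010101001011'', 3),
    (bits ''001111001100101011010111011'', 3),
    (bits ''001111010011010011001000100'', 1),
    (bits ''010001001011010101010000111'', 3),
    (bits ''010001010100101010110000111'', 1),
    (bits ''010110101011001100110001000'', 1),
    (bits ''010110110100110100101110111'', 3),
    (bits ''011001100111100000011001100'', 3),
    (bits ''100010001010101101011100001'', 3),
    (bits ''100010010101010010111100001'', 3),
    (bits ''101010100110011000010101010'', 1),
    (bits ''110011000001111000001100110'', 1)]"
definition bsel :: "nat list" where "bsel = [0, 1, 2, 0, 0, 1, 2, 3, 3, 4, 5, 6, 7, 8, 9, 10, 10, 11, 12, 13, 14, 15, 16, 17, 18, 19, 20]"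

lemma c_w1: "\<forall>s\<in>set Slist. s \<noteq> zero27 \<longrightarrow> 12 \<le> length (filter id s)" unfolding zero27_def by code_simp
lemma c_w2: "\<forall>k<21. length (filter id (beta!k)) \<le> 6" by code_simp
lemma c_sel: "\<forall>j<27. bsel!j < 21 \<and> beta!(bsel!j)!j" by code_simp

lemma weight_mono: "length xs = length ys \<Longrightarrow> (\<forall>i<length xs. xs!i \<longrightarrow> ys!i) \<Longrightarrow> length (filter id xs) \<le> length (filter id ys)"
  unfolding length_filter_conv_card by (rule card_mono) auto

lemma c_cert1: "\<forall>p\<in>set cert. fst p \<in> set Slist" by code_simp
lemma c_cert2: "\<forall>k<27. sum_list (map (\<lambda>(y,l). if y!k then l else 0) cert) mod 4 = 0" by code_simp
lemma c_cert3: "odd (sum_list (map (\<lambda>(y,l). if Q27 y then l else 0) cert))" by code_simp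

lemma prodlist_prod:
  fixes f :: "nat \<Rightarrow> 'b \<Rightarrow> complex"
  shows "prod_list (map (\<lambda>(y,l). (\<Prod>k\<in>K. f k y) ^ l) xs) = (\<Prod>k\<in>K. prod_list (map (\<lambda>(y,l). f k y ^ l) xs))"
proof (induction xs)
  case (Cons p xs) then show ?case by (cases p) (auto simp: prod.distrib prod_power_distrib)
qed simp

lemma prodlist_split:
  fixes f :: "bool \<Rightarrow> complex"
  shows "prod_list (map (\<lambda>(y,l). f (y!k) ^ l) xs)
     = f True ^ sum_list (map (\<lambda>(y,l). if y!k then l else 0) xs) * f False ^ sum_list (map (\<lambda>(y,l). if y!k then 0 else l) xs)"
proof (induction xs)
  case (Cons p xs) then show ?case by (cases p) (auto simp: power_add mult_ac)
qed simp

lemma sl_add: "(\<And>x. f x + g x = h x) \<Longrightarrow> sum_list (map f xs) + sum_list (map g xs) = (sum_list (map h xs) :: nat)"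
proof (induction xs)
  case Nil show ?case by simp
next
  case (Cons x xs)
  have a: "f x + g x = h x" by (rule Cons.prems)
  have b: "sum_list (map f xs) + sum_list (map g xs) = sum_list (map h xs)" by (rule Cons.IH[OF Cons.prems])
  show ?case unfolding list.map sum_list.Cons using a b by linarith
qed

lemma sumlist_tot: fixes xs :: "(bool list \<times> nat) list" shows "sum_list (map (\<lambda>(y,l). if y!k then l else 0) xs) + sum_list (map (\<lambda>(y,l). if y!k then 0 else l) xs)
   = sum_list (map snd xs)"
proof -
  have "\<And>p::bool list \<times> nat. (\<lambda>(y,l). if y!k then l else 0) p + (\<lambda>(y,l). if y!k then 0 else l) p = snd p" by auto
  then show ?thesis by (rule sl_add)
qed

lemma prodlist_qs: "prod_list (map (\<lambda>(y,l). qs y ^ l) xs) = (-1) ^ sum_list (map (\<lambda>(y,l). if Q27 y then l else 0) xs)"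
proof (induction xs)
  case (Cons p xs) then show ?case by (cases p) (auto simp: qs_def power_add)
qed simp

lemma pow4_eq: "(a::complex) ^ 4 = b ^ 4 \<Longrightarrow> m mod 4 = 0 \<Longrightarrow> a ^ m = b ^ m"
proof -
  assume "a ^ 4 = b ^ 4" "m mod 4 = 0"
  then obtain q where "m = 4 * q" by auto
  then show ?thesis using \<open>a ^ 4 = b ^ 4\<close> by (simp add: power_mult)
qed

lemma cert_contra:
  fixes d :: "nat \<Rightarrow> bool \<Rightarrow> complex"
  assumes qd: "\<And>y. y \<in> S27 \<Longrightarrow> qs y = (\<Prod>k::nat<27. d k (y!k))"
    and d4: "\<And>k. k < 27 \<Longrightarrow> d k True ^ 4 = d k False ^ 4"
  shows False
proof -
  let ?tot = "sum_list (map snd cert)"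
  have "prod_list (map (\<lambda>(y,l). qs y ^ l) cert) = prod_list (map (\<lambda>(y,l). (\<Prod>k::nat<27. d k (y!k)) ^ l) cert)"
    using c_cert1 qd S27_eq by (intro arg_cong[where f=prod_list] map_cong) auto
  also have "\<dots> = (\<Prod>k::nat<27. prod_list (map (\<lambda>(y,l). d k (y!k) ^ l) cert))"
    by (rule prodlist_prod)
  also have "\<dots> = (\<Prod>k::nat<27. d k False ^ ?tot)"
  proof (rule prod.cong)
    fix k :: nat assume "k \<in> {..<27}"
    then have k: "k < 27" by simp
    have "d k True ^ sum_list (map (\<lambda>(y,l). if y!k then l else 0) cert) = d k False ^ sum_list (map (\<lambda>(y,l). if y!k then l else 0) cert)"
      by (rule pow4_eq[OF d4[OF k]]) (use c_cert2 k in auto)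
    then show "prod_list (map (\<lambda>(y,l). d k (y!k) ^ l) cert) = d k False ^ ?tot"
      by (simp add: prodlist_split[of "d k"] power_add[symmetric] sumlist_tot)
  qed simp
  also have "\<dots> = (\<Prod>k::nat<27. d k (zero27!k)) ^ ?tot" by (simp add: zero27_def prod_power_distrib)
  also have "\<dots> = 1" using qd[OF zero_S] by (simp add: zero27_def qs_def Q27_def)
  finally have "(-1::complex) ^ sum_list (map (\<lambda>(y,l). if Q27 y then l else 0) cert) = 1"
    by (simp add: prodlist_qs)
  then show False using c_cert3 by simp
qed


lemma kron_cong: "(\<And>k. k < n \<Longrightarrow> A k = B k) \<Longrightarrow> kron n A = kron n B"
  by (auto simp: fun_eq_iff kron_def intro!: prod.cong)

lemma fixR:
  assumes cU: "\<forall>j<27. clifford1 (Us j)" and eqU: "apply_op 27 (kron 27 Us) ket_S = ket_QS" and b: "b \<in> Sp"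
  shows "apply_op 27 (kron 27 (\<lambda>k. cl (Us k) (pz False (b!k)))) ket_QS = ket_QS"
proof -
  let ?R = "\<lambda>k. cl (Us k) (pz False (b!k))"
  have u: "\<And>k. k < 27 \<Longrightarrow> unitary1 (Us k)" using cU by (simp add: clifford1_def)
  have "apply_op 27 (kron 27 ?R) ket_QS = apply_op 27 (kron 27 ?R) (apply_op 27 (kron 27 Us) ket_S)" using eqU by simp
  also have "\<dots> = apply_op 27 (kron 27 (\<lambda>k. mult1 (?R k) (Us k))) ket_S" by (simp add: apply_apply mult_op_kron)
  also have "kron 27 (\<lambda>k. mult1 (?R k) (Us k)) = kron 27 (\<lambda>k. mult1 (Us k) (pz False (b!k)))"
    by (rule kron_cong) (simp add: cl_mult u)
  also have "\<dots> = mult_op 27 (kron 27 Us) (PZ zero27 b)"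
    unfolding PZ_def mult_op_kron by (rule kron_cong) (simp add: zero27_def)
  also have "apply_op 27 (mult_op 27 (kron 27 Us) (PZ zero27 b)) ket_S = apply_op 27 (kron 27 Us) (apply_op 27 (PZ zero27 b) ket_S)"
    by (simp add: apply_apply)
  also have "apply_op 27 (PZ zero27 b) ket_S = ket_S" using GS_fix[OF _ b] zero_S by (simp add: zero27_def)
  finally show ?thesis using eqU by simp
qed

lemma Ztype_all:
  assumes cU: "\<forall>j<27. clifford1 (Us j)" and eqU: "apply_op 27 (kron 27 Us) ket_S = ket_QS" and j: "j < 27"
  shows "cl (Us j) pauliZ True False = 0"
proof -
  have sel: "bsel!j < 21" "beta!(bsel!j)!j" using c_sel j by auto
  define b where "b = beta!(bsel!j)"
  have bSp: "b \<in> Sp" using beta_in_Sp[OF sel(1)] by (simp add: b_def)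
  define R where "R = (\<lambda>k. cl (Us k) (pz False (b!k)))"
  have RPG: "\<And>k. k < 27 \<Longrightarrow> R k \<in> PG16" using cU cl_in pz_in by (simp add: R_def)
  define \<alpha> where "\<alpha> = map (\<lambda>k. R k True False \<noteq> 0) [0..<27]"
  have la: "length \<alpha> = 27" by (simp add: \<alpha>_def)
  have an: "\<And>k. k < 27 \<Longrightarrow> \<alpha>!k = (R k True False \<noteq> 0)" by (simp add: \<alpha>_def)
  have "apply_op 27 (kron 27 R) ket_QS \<alpha> = (\<Prod>k<27. R k (\<alpha>!k) (\<alpha>!k \<noteq> \<alpha>!k)) * ket_QS (xorv \<alpha> \<alpha>)"
  proof (rule mono_apply[OF _ la la])
    fix k u v assume "k < 27" "u \<noteq> (v \<noteq> \<alpha>!k)"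
    then show "R k u v = 0" using PG16_support(1)[OF RPG[of k]] an by simp
  qed
  moreover have "apply_op 27 (kron 27 R) ket_QS = ket_QS" using fixR[OF cU eqU bSp] by (simp add: R_def)
  moreover have "(\<Prod>k<27. R k (\<alpha>!k) (\<alpha>!k \<noteq> \<alpha>!k)) \<noteq> 0"
  proof -
    have "\<And>k. k < 27 \<Longrightarrow> R k (\<alpha>!k) False \<noteq> 0" using PG16_support(2)[OF RPG, of _ False] an by simp
    then show ?thesis by simp
  qed
  moreover have "ket_QS (xorv \<alpha> \<alpha>) \<noteq> 0"
    using xorv_self[of \<alpha>] la zero_S kap_nz by (simp add: ket_QS_eq ket_S_eq qs_def)
  ultimately have "ket_QS \<alpha> \<noteq> 0" by simp
  then have aS: "\<alpha> \<in> S27" by (auto simp: ket_QS_eq ket_S_eq split: if_splits)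
  have "\<forall>i<27. \<alpha>!i \<longrightarrow> b!i"
  proof (intro allI impI)
    fix i assume i: "i < 27" "\<alpha>!i"
    show "b!i"
    proof (rule ccontr)
      assume "\<not> b!i"
      then have "R i = id1" using cU i cl_id by (simp add: R_def pz_def clifford1_def id1_def[symmetric] cong: if_cong)
      then show False using i an by (simp add: id1_def)
    qed
  qed
  moreover have lb: "length b = 27" using lenSp[OF bSp] .
  ultimately have "length (filter id \<alpha>) \<le> length (filter id b)" using weight_mono[of \<alpha> b] la by simp
  also have "\<dots> \<le> 6" using c_w2 sel(1) by (simp add: b_def)
  finally have "\<alpha> = zero27" using c_w1 aS S27_eq by fastforce
  then have "R j True False = 0" using an[OF j] j by (simp add: zero27_def)
  moreover have "pz False (b!j) = pauliZ" using sel(2) by (auto simp: b_def pz_def pauliZ_def fun_eq_iff)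
  ultimately show ?thesis by (simp add: R_def)
qed

lemma notLC: "\<not> LC_equiv 27 ket_S ket_QS"
proof
  assume "LC_equiv 27 ket_S ket_QS"
  then obtain Us where cU: "\<forall>j<27. clifford1 (Us j)" and eqU: "apply_op 27 (kron 27 Us) ket_S = ket_QS"
    by (auto simp: LC_equiv_def)
  have dz: "\<And>k. k < 27 \<Longrightarrow> (Us k False True = 0 \<and> Us k True False = 0) \<or> (Us k False False = 0 \<and> Us k True True = 0)"
    using Z_type Ztype_all[OF cU eqU] cU by blast
  define E where "E = map (\<lambda>k. Us k False False = 0) [0..<27]"
  have lE: "length E = 27" by (simp add: E_def)
  have En: "\<And>k. k < 27 \<Longrightarrow> E!k = (Us k False False = 0)" by (simp add: E_def)
  define d where "d = (\<lambda>k a. Us k a (a \<noteq> E!k))"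
  have XP: "\<And>k. k < 27 \<Longrightarrow> (\<forall>u v. u \<noteq> (v \<noteq> E!k) \<longrightarrow> Us k u v = 0) \<and> d k False \<noteq> 0 \<and> d k True ^ 4 = d k False ^ 4"
  proof -
    fix k :: nat assume k: "k < 27"
    note X = X_phase[OF cU[rule_format, OF k] dz[OF k]]
    show "(\<forall>u v. u \<noteq> (v \<noteq> E!k) \<longrightarrow> Us k u v = 0) \<and> d k False \<noteq> 0 \<and> d k True ^ 4 = d k False ^ 4"
      using X En[OF k] by (simp add: d_def)
  qed
  have qd: "qs y = (\<Prod>k<27. d k (y!k))" if yS: "y \<in> S27" for y
  proof -
    have ly: "length y = 27" using lenS[OF yS] .
    have "apply_op 27 (kron 27 Us) ket_S y = (\<Prod>k<27. Us k (y!k) (y!k \<noteq> E!k)) * ket_S (xorv y E)"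
      by (rule mono_apply[OF _ lE ly]) (use XP in blast)
    then have e: "qs y * kap = (\<Prod>k<27. d k (y!k)) * ket_S (xorv y E)"
      using eqU yS by (simp add: ket_QS_eq ket_S_eq d_def)
    have "qs y * kap \<noteq> 0" using kap_nz by (simp add: qs_def)
    then have "ket_S (xorv y E) = kap" using e by (auto simp: ket_S_eq split: if_splits)
    then show ?thesis using e kap_nz by simp
  qed
  show False by (rule cert_contra[of d]) (use qd XP in auto)
qed


theorem mainTheorem1:
  shows "stabilizer_state 27 ket_S \<and> stabilizer_state 27 ket_QS \<and>
         LU_equiv 27 ket_S ket_QS \<and> \<not> LC_equiv 27 ket_S ket_QS \<and>
         \<not> (\<forall>n \<psi> \<phi>. stabilizer_state n \<psi> \<and> stabilizer_state n \<phi> \<and> LU_equiv n \<psi> \<phi>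
                 \<longrightarrow> LC_equiv n \<psi> \<phi>)"
  using stab_S stab_QS LU notLC by blast

end
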